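(* Let $a_1,a_2,a_3>0$, $\beta\in\mathbb{R}$, $\mu>0$, and let $\mathcal{A}^\mu(\beta)$ be the operator on the periodic graph $\mathcal{G}$ described in the context. Let $\omega>0$ with $\omega\notin\{\pi\mathbb{Z}/a_1\}\cup\{\pi\mathbb{Z}/a_2\}\cup\{\pi\mathbb{Z}/a_3\}$. Then $u\in D(\mathcal{A}^\mu(\beta))$ is an eigenfunction of $\mathcal{A}^\mu(\beta)$ associated with $\lambda=\omega^2$ (i.e. $\mathcal{A}^\mu(\beta)u=\omega^2 u$) if and only if the sequence of vertex values $(\mathbf{u}_{k,\ell})_{(k,\ell)\in\mathbb{Z}^2}$ belongs to $\ell_2(\mathbb{Z}^2)$ and satisfies $$\frac{\mathbf{u}_{k+1,\ell}+\mathbf{u}_{k-1,\ell}}{\sin(\omega a_1)}+\frac{\mathbf{u}_{k,\ell+1}+\mathbf{u}_{k,\ell-1}}{\sin(\omega a_2)}-2g_\beta(\omega)\mathbf{u}_{k,\ell}=0\quad\forall (k,\ell)\in\mathbb{Z}^2\setminus\{(0,0)\},$$ $$\frac{\mathbf{u}_{1,0}+\mathbf{u}_{-1,0}}{\sin(\omega a_1)}+\frac{\mathbf{u}_{0,1}+\mathbf{u}_{0,-1}}{\sin(\omega a_2)}-2g_\beta(\omega)\mathbf{u}_{0,0}=2(\mu-1)\frac{\cos(\omega a_3)-\cos\beta}{\sin(\omega a_3)}\mathbf{u}_{0,0},$$ where $g_\beta(\omega)=\frac{1}{\tan(\omega a_1)}+\frac{1}{\tan(\omega a_2)}+\frac{\cos(\omega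 a_3)-\cos\beta}{\sin(\omega a_3)}$.
   Context: The graph $\mathcal{G}\subset\mathbb{R}^3$ has vertices $v_{k,\ell}=(ka_1,\ell a_2,0)$ and $v^\pm_{k,\ell}=(ka_1,\ell a_2,\pm a_3/2)$, $(k,\ell)\in\mathbb{Z}^2$, and edges $e_{k+1/2,\ell}=[v_{k,\ell},v_{k+1,\ell}]$ (parametrized by $x_1\in[ka_1,(k+1)a_1]$), $e_{k,\ell+1/2}=[v_{k,\ell},v_{k,\ell+1}]$ (parametrized by $x_2\in[\ell a_2,(\ell+1)a_2]$), and $e^\pm_{k,\ell}=[v_{k,\ell},v^\pm_{k,\ell}]$ (parametrized by $x_3\in[0,a_3/2]$, resp. $x_3\in[-a_3/2,0]$). For a function $u$ on $\mathcal{G}$, $\mathbf{u}_{k,\ell}$, $\mathbf{u}^\pm_{k,\ell}$ are its values at $v_{k,\ell}$, $v^\pm_{k,\ell}$, and $u_{k+1/2,\ell}(x_1)$, $u_{k,\ell+1/2}(x_2)$, $u^\pm_{k,\ell}(x_3)$ its restrictions to the edges. Weights: $w^\mu_{k,\ell}=\mu$ if $k=\ell=0$ and $1$ otherwise. $L_2^\mu(\mathcal{G})$ is the space of functions with finite norm $\|u\|^2=\sum_{(k,\ell)}\big(w^\mu_{k,\ell}\sum_\pm\|u^\pm_{k,\ell}\|^2_{L_2(e^\pm_{k,\ell})}+\|u_{k+1/2,\ell}\|^2_{L_2}+\|u_{k,\ell+1/2}\|^2_{L_2}\big)$; $H^2(\mathcal{G})$ is the space of continuous functions on $\mathcal{G}$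 with $\sum_{(k,\ell)}(\sum_\pm\|u^\pm_{k,\ell}\|^2_{H^2}+\|u_{k+1/2,\ell}\|^2_{H^2}+\|u_{k,\ell+1/2}\|^2_{H^2})<\infty$. The operator $\mathcal{A}^\mu(\beta)$ in $L_2^\mu(\mathcal{G})$ has domain the set of $u\in H^2(\mathcal{G})$ such that for all $(k,\ell)\in\mathbb{Z}^2$: $\mathbf{u}^+_{k,\ell}=e^{-i\beta}\mathbf{u}^-_{k,\ell}$, $(u^+_{k,\ell})'(a_3/2)=e^{-i\beta}(u^-_{k,\ell})'(-a_3/2)$, and the Kirchhoff condition $u'_{k+1/2,\ell}(ka_1)-u'_{k-1/2,\ell}(ka_1)+u'_{k,\ell+1/2}(\ell a_2)-u'_{k,\ell-1/2}(\ell a_2)+w^\mu_{k,\ell}\big((u^+_{k,\ell})'(0)-(u^-_{k,\ell})'(0)\big)=0$; it acts by $\mathcal{A}^\mu(\beta)u=-u''$ on each edge. It is self-adjoint for the weighted scalar product of $L_2^\mu(\mathcal{G})$. *)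

theory Defs
  imports "HOL-Analysis.Analysis"
begin

text \<open>A function on the graph is given by its restrictions to the edges:
  gh u k l  = u restricted to e_{k+1/2,l}, parametrized by x1 in [k a1, (k+1) a1];
  gv u k l  = u restricted to e_{k,l+1/2}, parametrized by x2 in [l a2, (l+1) a2];
  gp u k l  = u restricted to e^+_{k,l},  parametrized by x3 in [0, a3/2];
  gm u k l  = u restricted to e^-_{k,l},  parametrized by x3 in [-a3/2, 0].
  Values outside the parameter intervals are irrelevant.\<close>

record gfun =
  gh :: "int \<Rightarrow> int \<Rightarrow> real \<Rightarrow> complex"
  gv :: "int \<Rightarrow> int \<Rightarrow> real \<Rightarrow> complex"
  gp :: "int \<Rightarrow> int \<Rightarrow> real \<Rightarrow> complex"
  gm :: "int \<Rightarrow> int \<Rightarrow> real \<Rightarrow> complex"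

definition H2_rep ::
  "real \<Rightarrow> real \<Rightarrow> (real \<Rightarrow> complex) \<Rightarrow> (real \<Rightarrow> complex) \<Rightarrow> (real \<Rightarrow> complex) \<Rightarrow> bool" where
  "H2_rep a b f f1 f2 \<longleftrightarrow>
     set_integrable lborel {a..b} f2 \<and>
     set_integrable lborel {a..b} (\<lambda>x. (cmod (f2 x))\<^sup>2) \<and>
     (\<forall>x\<in>{a..b}. f1 x = f1 a + set_lebesgue_integral lborel {a..x} f2) \<and>
     (\<forall>x\<in>{a..b}. f x = f a + set_lebesgue_integral lborel {a..x} f1)"

definition H2_edge :: "real \<Rightarrow> real \<Rightarrow> (real \<Rightarrow> complex) \<Rightarrow> bool" where
  "H2_edge a b f \<longleftrightarrow> (\<exists>f1 f2. H2_rep a b f f1 f2)"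

text \<open>First and second derivative (the first is unique on [a,b], the second a.e.).\<close>
definition d1 :: "real \<Rightarrow> real \<Rightarrow> (real \<Rightarrow> complex) \<Rightarrow> real \<Rightarrow> complex" where
  "d1 a b f = (SOME f1. \<exists>f2. H2_rep a b f f1 f2)"

definition d2 :: "real \<Rightarrow> real \<Rightarrow> (real \<Rightarrow> complex) \<Rightarrow> real \<Rightarrow> complex" where
  "d2 a b f = (SOME f2. H2_rep a b f (d1 a b f) f2)"

definition H2_sqnorm :: "real \<Rightarrow> real \<Rightarrow> (real \<Rightarrow> complex) \<Rightarrow> real" where
  "H2_sqnorm a b f =
     set_lebesgue_integral lborel {a..b}
       (\<lambda>x. (cmod (f x))\<^sup>2 + (cmod (d1 a b f x))\<^sup>2 + (cmod (d2 a b f x))\<^sup>2)"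

definition wmu :: "real \<Rightarrow> int \<Rightarrow> int \<Rightarrow> real" where
  "wmu \<mu> k l = (if k = 0 \<and> l = 0 then \<mu> else 1)"

definition vtx :: "real \<Rightarrow> gfun \<Rightarrow> int \<Rightarrow> int \<Rightarrow> complex" where
  "vtx a1 u k l = gh u k l (of_int k * a1)"

definition in_H2G :: "real \<Rightarrow> real \<Rightarrow> real \<Rightarrow> gfun \<Rightarrow> bool" where
  "in_H2G a1 a2 a3 u \<longleftrightarrow>
     (\<forall>k l. H2_edge (of_int k * a1) (of_int (k+1) * a1) (gh u k l)
          \<and> H2_edge (of_int l * a2) (of_int (l+1) * a2) (gv u k l)
          \<and> H2_edge 0 (a3/2) (gp u k l)
          \<and> H2_edge (-a3/2) 0 (gm u k l)) \<and>
     (\<forall>k l. gh u (k-1) l (of_int k * a1) = gh u k l (of_int k * a1)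
          \<and> gv u k l (of_int l * a2) = gh u k l (of_int k * a1)
          \<and> gv u k (l-1) (of_int l * a2) = gh u k l (of_int k * a1)
          \<and> gp u k l 0 = gh u k l (of_int k * a1)
          \<and> gm u k l 0 = gh u k l (of_int k * a1)) \<and>
     ((\<lambda>(k,l). H2_sqnorm 0 (a3/2) (gp u k l) + H2_sqnorm (-a3/2) 0 (gm u k l)
             + H2_sqnorm (of_int k * a1) (of_int (k+1) * a1) (gh u k l)
             + H2_sqnorm (of_int l * a2) (of_int (l+1) * a2) (gv u k l)) summable_on UNIV)"

definition in_dom :: "real \<Rightarrow> real \<Rightarrow> real \<Rightarrow> real \<Rightarrow> real \<Rightarrow> gfun \<Rightarrow> bool" where
  "in_dom a1 a2 a3 \<mu> \<beta> u \<longleftrightarrow>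
     in_H2G a1 a2 a3 u \<and>
     (\<forall>k l.
        gp u k l (a3/2) = exp (- \<i> * of_real \<beta>) * gm u k l (-a3/2) \<and>
        d1 0 (a3/2) (gp u k l) (a3/2) = exp (- \<i> * of_real \<beta>) * d1 (-a3/2) 0 (gm u k l) (-a3/2) \<and>
        d1 (of_int k * a1) (of_int (k+1) * a1) (gh u k l) (of_int k * a1)
        - d1 (of_int (k-1) * a1) (of_int k * a1) (gh u (k-1) l) (of_int k * a1)
        + d1 (of_int l * a2) (of_int (l+1) * a2) (gv u k l) (of_int l * a2)
        - d1 (of_int (l-1) * a2) (of_int l * a2) (gv u k (l-1)) (of_int l * a2)
        + of_real (wmu \<mu> k l) * (d1 0 (a3/2) (gp u k l) 0 - d1 (-a3/2) 0 (gm u k l) 0) = 0)"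

definition edge_eig :: "real \<Rightarrow> real \<Rightarrow> real \<Rightarrow> (real \<Rightarrow> complex) \<Rightarrow> bool" where
  "edge_eig lam a b f \<longleftrightarrow> (AE x in lborel. x \<in> {a..b} \<longrightarrow> - d2 a b f x = of_real lam * f x)"

definition is_eig_eq :: "real \<Rightarrow> real \<Rightarrow> real \<Rightarrow> real \<Rightarrow> gfun \<Rightarrow> bool" where
  "is_eig_eq a1 a2 a3 lam u \<longleftrightarrow>
     (\<forall>k l. edge_eig lam (of_int k * a1) (of_int (k+1) * a1) (gh u k l)
          \<and> edge_eig lam (of_int l * a2) (of_int (l+1) * a2) (gv u k l)
          \<and> edge_eig lam 0 (a3/2) (gp u k l)
          \<and> edge_eig lam (-a3/2) 0 (gm u k l))"

definition g_beta :: "real \<Rightarrow> real \<Rightarrow> real \<Rightarrow> real \<Rightarrow> real \<Rightarrow> real" where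
  "g_beta a1 a2 a3 \<beta> \<omega> = 1 / tan (\<omega> * a1) + 1 / tan (\<omega> * a2)
      + (cos (\<omega> * a3) - cos \<beta>) / sin (\<omega> * a3)"

definition in_l2 :: "(int \<Rightarrow> int \<Rightarrow> complex) \<Rightarrow> bool" where
  "in_l2 c \<longleftrightarrow> (\<lambda>(k,l). (cmod (c k l))\<^sup>2) summable_on UNIV"

definition disc_system :: "real \<Rightarrow> real \<Rightarrow> real \<Rightarrow> real \<Rightarrow> real \<Rightarrow> real \<Rightarrow> (int \<Rightarrow> int \<Rightarrow> complex) \<Rightarrow> bool" where
  "disc_system a1 a2 a3 \<mu> \<beta> \<omega> c \<longleftrightarrow>
     (\<forall>k l. (k, l) \<noteq> (0, 0) \<longrightarrow>
        (c (k+1) l + c (k-1) l) / of_real (sin (\<omega> * a1))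
        + (c k (l+1) + c k (l-1)) / of_real (sin (\<omega> * a2))
        - 2 * of_real (g_beta a1 a2 a3 \<beta> \<omega>) * c k l = 0) \<and>
     (c 1 0 + c (-1) 0) / of_real (sin (\<omega> * a1))
        + (c 0 1 + c 0 (-1)) / of_real (sin (\<omega> * a2))
        - 2 * of_real (g_beta a1 a2 a3 \<beta> \<omega>) * c 0 0
      = 2 * of_real (\<mu> - 1) * of_real ((cos (\<omega> * a3) - cos \<beta>) / sin (\<omega> * a3)) * c 0 0"

end

theory Submission
  imports Defs
begin


lemma sets_lborel_atMost: "sets lborel = sigma_sets UNIV (range (\<lambda>a::real. {..a}))"
  unfolding sets_lborel by (subst borel_eq_atMost) (rule sets_measure_of, simp)

lemma AE_zero_from_atMost:
  fixes h :: "real \<Rightarrow> 'b::{banach, second_countable_topology}"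
  assumes int: "integrable lborel h"
    and z: "\<And>x. set_lebesgue_integral lborel {..x} h = 0"
    and tot: "integral\<^sup>L lborel h = 0"
  shows "AE x in lborel. h x = 0"
proof (rule sigma_finite_measure.density_zero[OF sigma_finite_lborel int])
  fix A :: "real set" assume "A \<in> sets lborel"
  hence A: "A \<in> sigma_sets UNIV (range (\<lambda>a::real. {..a}))" using sets_lborel_atMost by simp
  have ist: "Int_stable (range (\<lambda>a::real. {..a}))"
    by (auto simp: Int_stable_def)
  show "set_lebesgue_integral lborel A h = 0"
  proof (rule sigma_sets_induct_disjoint[OF ist _ A, where P="\<lambda>A. set_lebesgue_integral lborel A h = 0"])
    show "range atMost \<subseteq> Pow (UNIV::real set)" by simp
  next
    fix B :: "real set" assume "B \<in> range atMost" then show "set_lebesgue_integral lborel B h = 0" using z by auto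
  next
    show "set_lebesgue_integral lborel {} h = 0" by (simp add: set_lebesgue_integral_def)
  next
    fix B :: "real set" assume B: "B \<in> sigma_sets UNIV (range atMost)" "set_lebesgue_integral lborel B h = 0"
    have As: "B \<in> sets lborel" using B(1) sets_lborel_atMost by simp
    have "(\<lambda>x. indicator (UNIV - B) x *\<^sub>R h x) = (\<lambda>x. h x - indicator B x *\<^sub>R h x)"
      by (auto simp: indicator_def fun_eq_iff)
    hence "set_lebesgue_integral lborel (UNIV - B) h = integral\<^sup>L lborel h - set_lebesgue_integral lborel B h"
      unfolding set_lebesgue_integral_def
      by (simp only:) (rule Bochner_Integration.integral_diff[OF int integrable_mult_indicator[OF As int]])
    then show "set_lebesgue_integral lborel (UNIV - B) h = 0" using B tot by simp
  next
    fix A :: "nat \<Rightarrow> real set"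
    assume union: "disjoint_family A" "range A \<subseteq> sigma_sets UNIV (range atMost)"
      "\<And>i. set_lebesgue_integral lborel (A i) h = 0"
    have As: "\<And>i. A i \<in> sets lborel" using union(2) sets_lborel_atMost by auto
    have "(LINT x:(\<Union>i. A i)|lborel. h x) = (\<Sum>i. (LINT x:(A i)|lborel. h x))"
    proof (rule lebesgue_integral_countable_add)
      show "\<And>i j. i \<noteq> j \<Longrightarrow> A i \<inter> A j = {}" using union(1) by (simp add: disjoint_family_on_def)
      show "set_integrable lborel (\<Union> (range A)) h"
        unfolding set_integrable_def using As by (intro integrable_mult_indicator int) auto
    qed (use As in auto)
    then show "set_lebesgue_integral lborel (\<Union>i. A i) h = 0" using union(3) by simp
  qed
qed



lemma set_integral_cong_AE':
  fixes f g :: "real \<Rightarrow> 'b::{banach, second_countable_topology}"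
  assumes "set_integrable lborel A f" "set_integrable lborel A g"
    "AE x in lborel. x \<in> A \<longrightarrow> f x = g x"
  shows "set_lebesgue_integral lborel A f = set_lebesgue_integral lborel A g"
  unfolding set_lebesgue_integral_def
proof (rule integral_cong_AE)
  show "(\<lambda>x. indicat_real A x *\<^sub>R f x) \<in> borel_measurable lborel"
    using assms(1) unfolding set_integrable_def by (rule borel_measurable_integrable)
  show "(\<lambda>x. indicat_real A x *\<^sub>R g x) \<in> borel_measurable lborel"
    using assms(2) unfolding set_integrable_def by (rule borel_measurable_integrable)
  show "AE x in lborel. indicat_real A x *\<^sub>R f x = indicat_real A x *\<^sub>R g x"
    using assms(3) by eventually_elim (auto simp: indicator_def)
qed

lemma lint_sub_eq_integral:
  fixes f :: "real \<Rightarrow> complex"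
  assumes "set_integrable lborel {a..b} f" "x \<in> {a..b}"
  shows "set_lebesgue_integral lborel {a..x} f = integral {a..x} f"
    "set_integrable lborel {a..x} f"
proof -
  show si: "set_integrable lborel {a..x} f"
    by (rule set_integrable_subset[OF assms(1)]) (use assms(2) in auto)
  show "set_lebesgue_integral lborel {a..x} f = integral {a..x} f"
    by (rule set_borel_integral_eq_integral(2)[OF si])
qed

lemma H2_basic:
  fixes f f1 f2 :: "real \<Rightarrow> complex"
  assumes H: "H2_rep a b f f1 f2"
  shows "continuous_on {a..b} f1" "continuous_on {a..b} f"
    "\<And>x. x \<in> {a..b} \<Longrightarrow> (f has_vector_derivative f1 x) (at x within {a..b})"
proof -
  have i2: "set_integrable lborel {a..b} f2"
    and e1: "\<forall>x\<in>{a..b}. f1 x = f1 a + set_lebesgue_integral lborel {a..x} f2"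
    and e0: "\<forall>x\<in>{a..b}. f x = f a + set_lebesgue_integral lborel {a..x} f1"
    using H unfolding H2_rep_def by blast+
  have e1': "f1 x = f1 a + integral {a..x} f2" if x: "x\<in>{a..b}" for x
  proof -
    have "f1 x = f1 a + set_lebesgue_integral lborel {a..x} f2" using e1 x by blast
    then show ?thesis by (simp only: lint_sub_eq_integral(1)[OF i2 x])
  qed
  have "f2 integrable_on {a..b}" using set_borel_integral_eq_integral(1)[OF i2] .
  hence "continuous_on {a..b} (\<lambda>x. f1 a + integral {a..x} f2)"
    by (intro continuous_intros indefinite_integral_continuous_1)
  thus c1: "continuous_on {a..b} f1" by (rule continuous_on_eq) (rule e1'[symmetric])
  have e0': "f x = integral {a..x} f1 + f a" if x: "x\<in>{a..b}" for x
  proof -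
    have "set_integrable lborel {a..b} f1" by (rule borel_integrable_atLeastAtMost'[OF c1])
    moreover have "f x = f a + set_lebesgue_integral lborel {a..x} f1" using e0 x by blast
    ultimately show ?thesis by (simp only: lint_sub_eq_integral(1)[OF _ x] add.commute)
  qed
  show D: "(f has_vector_derivative f1 x) (at x within {a..b})" if x: "x \<in> {a..b}" for x
  proof (rule has_vector_derivative_transform[OF x e0'])
    show "((\<lambda>x. integral {a..x} f1 + f a) has_vector_derivative f1 x) (at x within {a..b})"
      unfolding has_vector_derivative_add_const by (rule integral_has_vector_derivative[OF c1 x])
  qed
  show "continuous_on {a..b} f" by (rule continuous_on_vector_derivative[OF D])
qed



lemma cos_sin_sq_c: "(of_real (cos t) :: complex)^2 + (of_real (sin t))^2 = 1"
proof -
  have "(of_real (cos t) :: complex)^2 + (of_real (sin t))^2 = of_real ((cos t)^2 + (sin t)^2)" by (simp only: of_real_add of_real_power)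
  also have "\<dots> = 1" by simp
  finally show ?thesis .
qed

lemma H2_sol:
  fixes f f1 f2 :: "real \<Rightarrow> complex" and \<omega> :: real
  assumes H: "H2_rep a b f f1 f2" and w: "\<omega> \<noteq> 0"
    and E: "AE x in lborel. x \<in> {a..b} \<longrightarrow> - f2 x = of_real (\<omega>\<^sup>2) * f x"
    and x: "x \<in> {a..b}"
  shows "f x = f a * of_real (cos (\<omega>*(x-a))) + f1 a * of_real (sin (\<omega>*(x-a)) / \<omega>)"
    "f1 x = - f a * of_real (\<omega> * sin (\<omega>*(x-a))) + f1 a * of_real (cos (\<omega>*(x-a)))"
proof -
  note B = H2_basic[OF H]
  have i2: "set_integrable lborel {a..b} f2"
    and e1: "\<forall>x\<in>{a..b}. f1 x = f1 a + set_lebesgue_integral lborel {a..x} f2"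
    using H unfolding H2_rep_def by blast+
  have cf: "continuous_on {a..b} (\<lambda>t. - of_real (\<omega>\<^sup>2) * f t)"
    by (intro continuous_intros B(2))
  have e1': "f1 y = integral {a..y} (\<lambda>t. - of_real (\<omega>\<^sup>2) * f t) + f1 a" if y: "y \<in> {a..b}" for y
  proof -
    have si: "set_integrable lborel {a..b} (\<lambda>t. - of_real (\<omega>\<^sup>2) * f t)"
      by (rule borel_integrable_atLeastAtMost'[OF cf])
    have "f1 y = f1 a + set_lebesgue_integral lborel {a..y} f2" using e1 y by blast
    also have "set_lebesgue_integral lborel {a..y} f2
        = set_lebesgue_integral lborel {a..y} (\<lambda>t. - of_real (\<omega>\<^sup>2) * f t)"
    proof (rule set_integral_cong_AE')
      show "set_integrable lborel {a..y} f2" by (rule lint_sub_eq_integral(2)[OF i2 y])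
      show "set_integrable lborel {a..y} (\<lambda>t. - of_real (\<omega>\<^sup>2) * f t)" by (rule lint_sub_eq_integral(2)[OF si y])
      show "AE x in lborel. x \<in> {a..y} \<longrightarrow> f2 x = - of_real (\<omega>\<^sup>2) * f x"
        using E
      proof eventually_elim
        case (elim t)
        show ?case
        proof
          assume "t \<in> {a..y}"
          then have "- f2 t = of_real (\<omega>\<^sup>2) * f t" using elim y by auto
          then show "f2 t = - of_real (\<omega>\<^sup>2) * f t" by (metis minus_minus mult_minus_left)
        qed
      qed
    qed
    also have "\<dots> = integral {a..y} (\<lambda>t. - of_real (\<omega>\<^sup>2) * f t)"
      by (rule lint_sub_eq_integral(1)[OF si y])
    finally show ?thesis by (simp only: add.commute)
  qed
  have D1: "(f1 has_vector_derivative (- of_real (\<omega>\<^sup>2) * f y)) (at y within {a..b})" if y: "y \<in> {a..b}" for y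
  proof (rule has_vector_derivative_transform[OF y e1'])
    show "((\<lambda>y. integral {a..y} (\<lambda>t. - of_real (\<omega>\<^sup>2) * f t) + f1 a) has_vector_derivative - of_real (\<omega>\<^sup>2) * f y) (at y within {a..b})"
      unfolding has_vector_derivative_add_const by (rule integral_has_vector_derivative[OF cf y])
  qed
  define C where "C t = (of_real (cos (\<omega>*(t-a))) :: complex)" for t
  define S where "S t = (of_real (sin (\<omega>*(t-a))) :: complex)" for t
  define W where "W = (of_real \<omega> :: complex)"
  have W0: "W \<noteq> 0" using w by (simp add: W_def)
  have dC: "(C has_vector_derivative (- W * S y)) (at y within {a..b})" for y
  proof -
    have "((\<lambda>t. cos (\<omega>*(t-a))) has_field_derivative (- \<omega> * sin (\<omega>*(y-a)))) (at y within {a..b})"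
      by (auto intro!: derivative_eq_intros)
    then have "((\<lambda>t. (of_real (cos (\<omega>*(t-a))) :: complex)) has_vector_derivative of_real (- \<omega> * sin (\<omega>*(y-a)))) (at y within {a..b})"
      by (rule has_vector_derivative_of_real)
    then show ?thesis by (simp add: C_def[abs_def] S_def W_def)
  qed
  have dS: "(S has_vector_derivative (W * C y)) (at y within {a..b})" for y
  proof -
    have "((\<lambda>t. sin (\<omega>*(t-a))) has_field_derivative (\<omega> * cos (\<omega>*(y-a)))) (at y within {a..b})"
      by (auto intro!: derivative_eq_intros)
    then have "((\<lambda>t. (of_real (sin (\<omega>*(t-a))) :: complex)) has_vector_derivative of_real (\<omega> * cos (\<omega>*(y-a)))) (at y within {a..b})"
      by (rule has_vector_derivative_of_real)
    then show ?thesis by (simp add: C_def S_def[abs_def] W_def)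
  qed
  have WW: "of_real (\<omega>\<^sup>2) = W * W" by (simp add: W_def power2_eq_square)
  define h1 where "h1 t = f t * C t - f1 t * S t / W" for t
  define h2 where "h2 t = f t * W * S t + f1 t * C t" for t
  have dh1: "(h1 has_vector_derivative 0) (at y within {a..b})" if y: "y \<in> {a..b}" for y
  proof -
    have "(h1 has_vector_derivative ((f y * (- W * S y) + f1 y * C y) - (f1 y * (W * C y) + (- of_real (\<omega>\<^sup>2) * f y) * S y) / W)) (at y within {a..b})"
      unfolding h1_def[abs_def]
      by (intro has_vector_derivative_diff has_vector_derivative_mult has_vector_derivative_divide B(3) D1 dC dS y)
    moreover have "(f y * (- W * S y) + f1 y * C y) - (f1 y * (W * C y) + (- of_real (\<omega>\<^sup>2) * f y) * S y) / W = 0"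
      using W0 unfolding WW by (simp add: field_simps)
    ultimately show ?thesis by metis
  qed
  have dh2: "(h2 has_vector_derivative 0) (at y within {a..b})" if y: "y \<in> {a..b}" for y
  proof -
    have "(h2 has_vector_derivative ((f y * W * (W * C y) + f1 y * W * S y) + (f1 y * (- W * S y) + (- of_real (\<omega>\<^sup>2) * f y) * C y))) (at y within {a..b})"
      unfolding h2_def[abs_def]
      by (intro has_vector_derivative_add has_vector_derivative_mult has_vector_derivative_mult_left B(3) D1 dC dS y)
    moreover have "(f y * W * (W * C y) + f1 y * W * S y) + (f1 y * (- W * S y) + (- of_real (\<omega>\<^sup>2) * f y) * C y) = 0"
      unfolding WW by (simp add: algebra_simps)
    ultimately show ?thesis by metis
  qed
  have ab: "a \<in> {a..b}" using x by auto
  obtain c1 where c1: "\<And>y. y \<in> {a..b} \<Longrightarrow> h1 y = c1"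
    using has_vector_derivative_zero_constant[of "{a..b}" h1] dh1 by (metis convex_real_interval(5))
  obtain c2 where c2: "\<And>y. y \<in> {a..b} \<Longrightarrow> h2 y = c2"
    using has_vector_derivative_zero_constant[of "{a..b}" h2] dh2 by (metis convex_real_interval(5))
  have h1x: "h1 x = f a" using c1[OF x] c1[OF ab] by (simp add: h1_def C_def S_def)
  have h2x: "h2 x = f1 a" using c2[OF x] c2[OF ab] by (simp add: h2_def C_def S_def)
  have cs: "C x ^ 2 + S x ^ 2 = 1" unfolding C_def S_def by (rule cos_sin_sq_c)
  have "f x = h1 x * C x + h2 x * S x / W"
  proof -
    have "h1 x * C x + h2 x * S x / W = f x * (C x ^ 2 + S x ^ 2)"
      using W0 unfolding h1_def h2_def by (simp add: field_simps power2_eq_square)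
    then show ?thesis using cs by simp
  qed
  then show "f x = f a * of_real (cos (\<omega>*(x-a))) + f1 a * of_real (sin (\<omega>*(x-a)) / \<omega>)"
    using h1x h2x by (simp add: C_def S_def W_def)
  have "f1 x = - W * h1 x * S x + h2 x * C x"
  proof -
    have "- W * h1 x * S x + h2 x * C x = f1 x * (C x ^ 2 + S x ^ 2)"
      using W0 unfolding h1_def h2_def by (simp add: field_simps power2_eq_square)
    then show ?thesis using cs by simp
  qed
  then show "f1 x = - f a * of_real (\<omega> * sin (\<omega>*(x-a))) + f1 a * of_real (cos (\<omega>*(x-a)))"
    using h1x h2x by (simp add: C_def S_def W_def)
qed



lemma H2_edge_rep: "H2_edge a b f \<Longrightarrow> H2_rep a b f (d1 a b f) (d2 a b f)"
proof -
  assume "H2_edge a b f"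
  then have "\<exists>f1 f2. H2_rep a b f f1 f2" unfolding H2_edge_def .
  then have "\<exists>f2. H2_rep a b f (d1 a b f) f2" unfolding d1_def by (rule someI_ex)
  then show ?thesis unfolding d2_def by (rule someI_ex)
qed

lemma d1_unique:
  assumes H: "H2_rep a b f f1 f2" and ab: "a < b" and x: "x \<in> {a..b}"
  shows "d1 a b f x = f1 x"
proof -
  have "H2_edge a b f" using H unfolding H2_edge_def by blast
  note H' = H2_edge_rep[OF this]
  show ?thesis
    using vector_derivative_unique_within_closed_interval[of a b x f "d1 a b f x" "f1 x"]
      H2_basic(3)[OF H' x] H2_basic(3)[OF H x] ab x by simp
qed

lemma d2_AE_unique:
  fixes f2 g2 :: "real \<Rightarrow> complex"
  assumes i1: "set_integrable lborel {a..b} f2" and i2: "set_integrable lborel {a..b} g2"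
    and eq: "\<forall>x\<in>{a..b}. set_lebesgue_integral lborel {a..x} f2 = set_lebesgue_integral lborel {a..x} g2"
  shows "AE x in lborel. x \<in> {a..b} \<longrightarrow> f2 x = g2 x"
proof (cases "a \<le> b")
  case False then show ?thesis by simp
next
  case ab: True
  define h where "h x = indicator {a..b} x *\<^sub>R (f2 x - g2 x)" for x
  have si: "set_integrable lborel {a..b} (\<lambda>x. f2 x - g2 x)" using i1 i2 by (rule set_integral_diff)
  have int: "integrable lborel h" using si unfolding set_integrable_def h_def[abs_def] .
  have z0: "set_lebesgue_integral lborel {a..y} (\<lambda>x. f2 x - g2 x) = 0" if y: "y \<in> {a..b}" for y
  proof -
    have "set_integrable lborel {a..y} f2" "set_integrable lborel {a..y} g2"
      using lint_sub_eq_integral(2)[OF i1 y] lint_sub_eq_integral(2)[OF i2 y] by auto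
    then show ?thesis using eq y by (simp add: set_integral_diff)
  qed
  have "AE x in lborel. h x = 0"
  proof (rule AE_zero_from_atMost[OF int])
    fix y :: real
    have hy: "(\<lambda>x. indicator {..y} x *\<^sub>R h x) = (\<lambda>x. indicator ({..y} \<inter> {a..b}) x *\<^sub>R (f2 x - g2 x))"
      by (auto simp: h_def indicator_def fun_eq_iff)
    show "set_lebesgue_integral lborel {..y} h = 0"
    proof (cases "y < a")
      case True
      then have "{..y} \<inter> {a..b} = {}" by auto
      then show ?thesis unfolding set_lebesgue_integral_def hy by simp
    next
      case False
      then have "{..y} \<inter> {a..b} = {a..min y b}" by auto
      moreover have "min y b \<in> {a..b}" using False ab by auto
      ultimately show ?thesis using z0[of "min y b"] unfolding set_lebesgue_integral_def hy by simp
    qed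
  next
    show "integral\<^sup>L lborel h = 0" using z0[of b] ab unfolding h_def set_lebesgue_integral_def by simp
  qed
  then show ?thesis by eventually_elim (auto simp: h_def)
qed

definition tf :: "real \<Rightarrow> complex \<Rightarrow> complex \<Rightarrow> real \<Rightarrow> real \<Rightarrow> complex" where
  "tf \<omega> A B a x = A * of_real (cos (\<omega>*(x-a))) + B * of_real (sin (\<omega>*(x-a)))"

lemma tf_deriv: "(tf \<omega> A B a has_vector_derivative tf \<omega> (of_real \<omega> * B) (- of_real \<omega> * A) a x) (at x within S)"
proof -
  have c: "((\<lambda>t. (of_real (cos (\<omega>*(t-a))) :: complex)) has_vector_derivative of_real (- \<omega> * sin (\<omega>*(x-a)))) (at x within S)"
    by (rule has_vector_derivative_of_real) (auto intro!: derivative_eq_intros)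
  have s: "((\<lambda>t. (of_real (sin (\<omega>*(t-a))) :: complex)) has_vector_derivative of_real (\<omega> * cos (\<omega>*(x-a)))) (at x within S)"
    by (rule has_vector_derivative_of_real) (auto intro!: derivative_eq_intros)
  have "(tf \<omega> A B a has_vector_derivative (A * of_real (- \<omega> * sin (\<omega>*(x-a))) + B * of_real (\<omega> * cos (\<omega>*(x-a))))) (at x within S)"
    unfolding tf_def[abs_def] by (intro has_vector_derivative_add has_vector_derivative_mult_right c s)
  moreover have "A * of_real (- \<omega> * sin (\<omega>*(x-a))) + B * of_real (\<omega> * cos (\<omega>*(x-a))) = tf \<omega> (of_real \<omega> * B) (- of_real \<omega> * A) a x"
    unfolding tf_def by (simp add: algebra_simps)
  ultimately show ?thesis by metis
qed

lemma tf_cont: "continuous_on S (tf \<omega> A B a)"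
  unfolding tf_def[abs_def] by (intro continuous_intros)

lemma tf_a: "tf \<omega> A B a a = A" by (simp add: tf_def)

lemma tf_norm_sq: "(cmod (tf \<omega> A B a x))\<^sup>2 \<le> 2 * ((cmod A)\<^sup>2 + (cmod B)\<^sup>2)"
proof -
  have "cmod (tf \<omega> A B a x) \<le> cmod A + cmod B"
  proof -
    have "cmod (tf \<omega> A B a x) \<le> cmod A * \<bar>cos (\<omega>*(x-a))\<bar> + cmod B * \<bar>sin (\<omega>*(x-a))\<bar>"
      unfolding tf_def by (metis norm_mult norm_of_real norm_triangle_ineq)
    also have "\<dots> \<le> cmod A * 1 + cmod B * 1"
      by (intro add_mono mult_left_mono) auto
    finally show ?thesis by simp
  qed
  then have "(cmod (tf \<omega> A B a x))\<^sup>2 \<le> (cmod A + cmod B)\<^sup>2"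
    by (intro power_mono) auto
  also have "\<dots> \<le> 2 * ((cmod A)\<^sup>2 + (cmod B)\<^sup>2)"
    using zero_le_power2[of "cmod A - cmod B"] unfolding power2_diff power2_sum by (smt (verit))
  finally show ?thesis .
qed



lemma lint_const_Icc: "a \<le> b \<Longrightarrow> set_lebesgue_integral lborel {a..b} (\<lambda>_. K::real) = (b - a) * K"
  by (subst set_integral_const) (auto simp: emeasure_lborel_Icc)

lemma tf_edge:
  fixes \<omega> :: real and A B :: complex
  assumes ab: "a < b"
  shows "H2_edge a b (tf \<omega> A B a)"
    "\<And>x. x \<in> {a..b} \<Longrightarrow> d1 a b (tf \<omega> A B a) x = tf \<omega> (of_real \<omega> * B) (- of_real \<omega> * A) a x"
    "edge_eig (\<omega>\<^sup>2) a b (tf \<omega> A B a)"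
    "H2_sqnorm a b (tf \<omega> A B a) \<le> (b-a) * (2*(1+\<omega>\<^sup>2+\<omega>^4)) * ((cmod A)\<^sup>2 + (cmod B)\<^sup>2)"
proof -
  define W where "W = (of_real \<omega> :: complex)"
  define f where "f = tf \<omega> A B a"
  define f1 where "f1 = tf \<omega> (W * B) (- W * A) a"
  define f2 where "f2 = tf \<omega> (W * (- W * A)) (- W * (W * B)) a"
  have f2eq: "f2 x = - of_real (\<omega>\<^sup>2) * f x" for x
    unfolding f2_def f_def tf_def W_def by (simp add: algebra_simps power2_eq_square)
  have df: "(f has_vector_derivative f1 x) (at x within S)" for x S
    unfolding f_def f1_def W_def by (rule tf_deriv)
  have df1: "(f1 has_vector_derivative f2 x) (at x within S)" for x S
    unfolding f1_def f2_def W_def by (rule tf_deriv)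
  have cf: "continuous_on S f" "continuous_on S f1" "continuous_on S f2" for S
    unfolding f_def f1_def f2_def by (rule tf_cont)+
  have si2: "set_integrable lborel {a..b} f2" by (rule borel_integrable_atLeastAtMost'[OF cf(3)])
  have si1: "set_integrable lborel {a..b} f1" by (rule borel_integrable_atLeastAtMost'[OF cf(2)])
  have ftc: "g x = g a + set_lebesgue_integral lborel {a..x} g'"
    if x: "x \<in> {a..b}" and si: "set_integrable lborel {a..b} g'"
      and d: "\<And>y. (g has_vector_derivative g' y) (at y within {a..x})" for g g' :: "real \<Rightarrow> complex" and x
  proof -
    have "(g' has_integral (g x - g a)) {a..x}"
      by (rule fundamental_theorem_of_calculus) (use x d in auto)
    then have "integral {a..x} g' = g x - g a" by (rule integral_unique)
    then show ?thesis using lint_sub_eq_integral(1)[OF si x] by simp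
  qed
  have H: "H2_rep a b f f1 f2"
    unfolding H2_rep_def
  proof (intro conjI ballI)
    show "set_integrable lborel {a..b} f2" by (rule si2)
    show "set_integrable lborel {a..b} (\<lambda>x. (cmod (f2 x))\<^sup>2)"
      by (rule borel_integrable_atLeastAtMost') (intro continuous_intros cf(3))
    show "f1 x = f1 a + set_lebesgue_integral lborel {a..x} f2" if "x \<in> {a..b}" for x
      by (rule ftc[OF that si2 df1])
    show "f x = f a + set_lebesgue_integral lborel {a..x} f1" if "x \<in> {a..b}" for x
      by (rule ftc[OF that si1 df])
  qed
  show E: "H2_edge a b (tf \<omega> A B a)" using H unfolding H2_edge_def f_def by blast
  have d1e: "d1 a b f x = f1 x" if "x \<in> {a..b}" for x by (rule d1_unique[OF H ab that])
  then show "\<And>x. x \<in> {a..b} \<Longrightarrow> d1 a b (tf \<omega> A B a) x = tf \<omega> (of_real \<omega> * B) (- of_real \<omega> * A) a x"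
    unfolding f_def f1_def W_def by simp
  have H': "H2_rep a b f (d1 a b f) (d2 a b f)" using H2_edge_rep E unfolding f_def by simp
  have i2': "set_integrable lborel {a..b} (d2 a b f)" using H' unfolding H2_rep_def by blast
  have AE2: "AE x in lborel. x \<in> {a..b} \<longrightarrow> d2 a b f x = f2 x"
  proof (rule d2_AE_unique[OF i2' si2], intro ballI)
    fix x assume x: "x \<in> {a..b}"
    have "d1 a b f x = d1 a b f a + set_lebesgue_integral lborel {a..x} (d2 a b f)"
      using H' x unfolding H2_rep_def by blast
    moreover have "f1 x = f1 a + set_lebesgue_integral lborel {a..x} f2"
      using H x unfolding H2_rep_def by blast
    moreover have "a \<in> {a..b}" using ab by auto
    ultimately show "set_lebesgue_integral lborel {a..x} (d2 a b f) = set_lebesgue_integral lborel {a..x} f2"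
      using d1e x by simp
  qed
  show "edge_eig (\<omega>\<^sup>2) a b (tf \<omega> A B a)"
    unfolding edge_eig_def f_def[symmetric] using AE2 by eventually_elim (auto simp: f2eq)
  define K where "K = 2*(1+\<omega>\<^sup>2+\<omega>^4) * ((cmod A)\<^sup>2 + (cmod B)\<^sup>2)"
  have sq1: "(cmod (d1 a b f x))\<^sup>2 \<le> 2 * \<omega>\<^sup>2 * ((cmod A)\<^sup>2 + (cmod B)\<^sup>2)" if x: "x \<in> {a..b}" for x
  proof -
    have "(cmod (d1 a b f x))\<^sup>2 \<le> 2 * ((cmod (W*B))\<^sup>2 + (cmod (- W * A))\<^sup>2)"
      unfolding d1e[OF x] f1_def by (rule tf_norm_sq)
    also have "\<dots> = 2 * \<omega>\<^sup>2 * ((cmod A)\<^sup>2 + (cmod B)\<^sup>2)"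
      by (simp add: W_def norm_mult power_mult_distrib algebra_simps)
    finally show ?thesis .
  qed
  have sq2: "(cmod (f2 x))\<^sup>2 \<le> 2 * \<omega>^4 * ((cmod A)\<^sup>2 + (cmod B)\<^sup>2)" for x
  proof -
    have "(cmod (f2 x))\<^sup>2 \<le> 2 * ((cmod (W * (- W * A)))\<^sup>2 + (cmod (- W * (W * B)))\<^sup>2)"
      unfolding f2_def by (rule tf_norm_sq)
    also have "\<dots> = 2 * \<omega>^4 * ((cmod A)\<^sup>2 + (cmod B)\<^sup>2)"
      by (simp add: W_def norm_mult power_mult_distrib algebra_simps power2_eq_square power4_eq_xxxx)
    finally show ?thesis .
  qed
  have sq0: "(cmod (f x))\<^sup>2 \<le> 2 * ((cmod A)\<^sup>2 + (cmod B)\<^sup>2)" for x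
    unfolding f_def by (rule tf_norm_sq)
  have cd1: "continuous_on {a..b} (d1 a b f)" by (rule H2_basic(1)[OF H'])
  have siL: "set_integrable lborel {a..b} (\<lambda>x. (cmod (f x))\<^sup>2 + (cmod (d1 a b f x))\<^sup>2 + (cmod (d2 a b f x))\<^sup>2)"
  proof (intro set_integral_add(1))
    show "set_integrable lborel {a..b} (\<lambda>x. (cmod (f x))\<^sup>2)"
      by (rule borel_integrable_atLeastAtMost') (intro continuous_intros cf(1))
    show "set_integrable lborel {a..b} (\<lambda>x. (cmod (d1 a b f x))\<^sup>2)"
      by (rule borel_integrable_atLeastAtMost') (intro continuous_intros cd1)
    show "set_integrable lborel {a..b} (\<lambda>x. (cmod (d2 a b f x))\<^sup>2)"
      using H' unfolding H2_rep_def by blast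
  qed
  have siR: "set_integrable lborel {a..b} (\<lambda>x. (cmod (f x))\<^sup>2 + (cmod (d1 a b f x))\<^sup>2 + (cmod (f2 x))\<^sup>2)"
  proof (intro set_integral_add(1))
    show "set_integrable lborel {a..b} (\<lambda>x. (cmod (f x))\<^sup>2)"
      by (rule borel_integrable_atLeastAtMost') (intro continuous_intros cf(1))
    show "set_integrable lborel {a..b} (\<lambda>x. (cmod (d1 a b f x))\<^sup>2)"
      by (rule borel_integrable_atLeastAtMost') (intro continuous_intros cd1)
    show "set_integrable lborel {a..b} (\<lambda>x. (cmod (f2 x))\<^sup>2)"
      by (rule borel_integrable_atLeastAtMost') (intro continuous_intros cf(3))
  qed
  have "H2_sqnorm a b f = set_lebesgue_integral lborel {a..b} (\<lambda>x. (cmod (f x))\<^sup>2 + (cmod (d1 a b f x))\<^sup>2 + (cmod (f2 x))\<^sup>2)"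
    unfolding H2_sqnorm_def
    by (rule set_integral_cong_AE'[OF siL siR]) (use AE2 in \<open>eventually_elim, auto\<close>)
  also have "\<dots> \<le> set_lebesgue_integral lborel {a..b} (\<lambda>_. K)"
  proof (rule set_integral_mono[OF siR])
    show "set_integrable lborel {a..b} (\<lambda>_. K)" by (rule borel_integrable_atLeastAtMost') simp
    fix x assume x: "x \<in> {a..b}"
    show "(cmod (f x))\<^sup>2 + (cmod (d1 a b f x))\<^sup>2 + (cmod (f2 x))\<^sup>2 \<le> K"
      using sq0[of x] sq1[OF x] sq2[of x] unfolding K_def by (simp add: algebra_simps)
  qed
  also have "\<dots> = (b - a) * K" using ab by (intro lint_const_Icc) simp
  finally show "H2_sqnorm a b (tf \<omega> A B a) \<le> (b-a) * (2*(1+\<omega>\<^sup>2+\<omega>^4)) * ((cmod A)\<^sup>2 + (cmod B)\<^sup>2)"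
    unfolding K_def f_def by (simp add: mult.assoc)
qed



lemma fwd_edge:
  fixes \<omega> :: real and f :: "real \<Rightarrow> complex"
  assumes E: "H2_edge a b f" and eig: "edge_eig (\<omega>\<^sup>2) a b f" and w: "\<omega> \<noteq> 0" and x: "x \<in> {a..b}"
  shows "f x = tf \<omega> (f a) (d1 a b f a / of_real \<omega>) a x"
    "d1 a b f x = tf \<omega> (d1 a b f a) (- of_real \<omega> * f a) a x"
proof -
  have H: "H2_rep a b f (d1 a b f) (d2 a b f)" by (rule H2_edge_rep[OF E])
  have AE: "AE x in lborel. x \<in> {a..b} \<longrightarrow> - d2 a b f x = of_real (\<omega>\<^sup>2) * f x"
    using eig unfolding edge_eig_def .
  show "f x = tf \<omega> (f a) (d1 a b f a / of_real \<omega>) a x"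
    using H2_sol(1)[OF H w AE x] unfolding tf_def by simp
  show "d1 a b f x = tf \<omega> (d1 a b f a) (- of_real \<omega> * f a) a x"
    using H2_sol(2)[OF H w AE x] unfolding tf_def by (simp add: algebra_simps)
qed

lemma rot_norm:
  fixes c Q :: complex and C S :: real
  assumes "C\<^sup>2 + S\<^sup>2 = 1"
  shows "(cmod (c * of_real C + Q * of_real S))\<^sup>2 + (cmod (- c * of_real S + Q * of_real C))\<^sup>2 = (cmod c)\<^sup>2 + (cmod Q)\<^sup>2"
proof -
  have "(cmod (c * of_real C + Q * of_real S))\<^sup>2 + (cmod (- c * of_real S + Q * of_real C))\<^sup>2
     = ((Re c)\<^sup>2 + (Re Q)\<^sup>2 + (Im c)\<^sup>2 + (Im Q)\<^sup>2) * (C\<^sup>2 + S\<^sup>2)"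
    unfolding cmod_power2 by (simp add: power2_eq_square algebra_simps)
  also have "\<dots> = (cmod c)\<^sup>2 + (cmod Q)\<^sup>2" using assms unfolding cmod_power2 by simp
  finally show ?thesis .
qed

lemma fwd_lower:
  fixes \<omega> :: real and f :: "real \<Rightarrow> complex"
  assumes E: "H2_edge a b f" and eig: "edge_eig (\<omega>\<^sup>2) a b f" and w: "\<omega> \<noteq> 0" and ab: "a \<le> b"
  shows "(b - a) * min 1 (\<omega>\<^sup>2) * (cmod (f a))\<^sup>2 \<le> H2_sqnorm a b f"
proof -
  have H: "H2_rep a b f (d1 a b f) (d2 a b f)" by (rule H2_edge_rep[OF E])
  note B = H2_basic[OF H]
  define m where "m = min 1 (\<omega>\<^sup>2)"
  have siL: "set_integrable lborel {a..b} (\<lambda>x. (cmod (f x))\<^sup>2 + (cmod (d1 a b f x))\<^sup>2 + (cmod (d2 a b f x))\<^sup>2)"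
  proof (intro set_integral_add(1))
    show "set_integrable lborel {a..b} (\<lambda>x. (cmod (f x))\<^sup>2)"
      by (rule borel_integrable_atLeastAtMost') (intro continuous_intros B(2))
    show "set_integrable lborel {a..b} (\<lambda>x. (cmod (d1 a b f x))\<^sup>2)"
      by (rule borel_integrable_atLeastAtMost') (intro continuous_intros B(1))
    show "set_integrable lborel {a..b} (\<lambda>x. (cmod (d2 a b f x))\<^sup>2)"
      using H unfolding H2_rep_def by blast
  qed
  have pt: "m * (cmod (f a))\<^sup>2 \<le> (cmod (f x))\<^sup>2 + (cmod (d1 a b f x))\<^sup>2 + (cmod (d2 a b f x))\<^sup>2"
    if x: "x \<in> {a..b}" for x
  proof -
    define C where "C = cos (\<omega>*(x-a))"
    define S where "S = sin (\<omega>*(x-a))"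
    define Q where "Q = d1 a b f a / of_real \<omega>"
    have CS: "C\<^sup>2 + S\<^sup>2 = 1" unfolding C_def S_def by simp
    have fx: "f x = f a * of_real C + Q * of_real S"
      using fwd_edge(1)[OF E eig w x] unfolding tf_def C_def S_def Q_def .
    have "d1 a b f x = tf \<omega> (d1 a b f a) (- of_real \<omega> * f a) a x" by (rule fwd_edge(2)[OF E eig w x])
    also have "\<dots> = of_real \<omega> * (- f a * of_real S + Q * of_real C)"
      unfolding tf_def C_def S_def Q_def using w by (simp add: field_simps)
    finally have d1x: "d1 a b f x = of_real \<omega> * (- f a * of_real S + Q * of_real C)" .
    define p where "p = (cmod (f a * of_real C + Q * of_real S))\<^sup>2"
    define q where "q = (cmod (- f a * of_real S + Q * of_real C))\<^sup>2"
    have pq: "p + q = (cmod (f a))\<^sup>2 + (cmod Q)\<^sup>2" unfolding p_def q_def by (rule rot_norm[OF CS])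
    have "(cmod (f x))\<^sup>2 + (cmod (d1 a b f x))\<^sup>2 = p + \<omega>\<^sup>2 * q"
      unfolding fx d1x p_def q_def by (simp add: norm_mult power_mult_distrib)
    moreover have "m * (p + q) \<le> p + \<omega>\<^sup>2 * q"
    proof -
      have "p \<ge> 0" "q \<ge> 0" unfolding p_def q_def by auto
      moreover have "m \<le> 1" "m \<le> \<omega>\<^sup>2" unfolding m_def by auto
      ultimately have "m * p \<le> 1 * p" "m * q \<le> \<omega>\<^sup>2 * q"
        by (intro mult_right_mono; simp)+
      then show ?thesis by (simp add: distrib_left)
    qed
    moreover have "m \<ge> 0" unfolding m_def by simp
    moreover have "(cmod (f a))\<^sup>2 \<le> p + q" using pq by simp
    ultimately have "m * (cmod (f a))\<^sup>2 \<le> (cmod (f x))\<^sup>2 + (cmod (d1 a b f x))\<^sup>2"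
      using mult_left_mono[of "(cmod (f a))\<^sup>2" "p + q" m] by linarith
    moreover have "0 \<le> (cmod (d2 a b f x))\<^sup>2" by simp
    ultimately show ?thesis by linarith
  qed
  have "set_lebesgue_integral lborel {a..b} (\<lambda>_. m * (cmod (f a))\<^sup>2) \<le> H2_sqnorm a b f"
    unfolding H2_sqnorm_def
  proof (rule set_integral_mono[OF _ siL])
    show "set_integrable lborel {a..b} (\<lambda>_. m * (cmod (f a))\<^sup>2)" by (rule borel_integrable_atLeastAtMost') simp
  qed (rule pt)
  moreover have "set_lebesgue_integral lborel {a..b} (\<lambda>_. m * (cmod (f a))\<^sup>2) = (b - a) * (m * (cmod (f a))\<^sup>2)"
    by (rule lint_const_Icc[OF ab])
  ultimately have "(b - a) * (m * (cmod (f a))\<^sup>2) \<le> H2_sqnorm a b f" by linarith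
  then show ?thesis unfolding m_def by (metis mult.assoc)
qed

lemma H2_sqnorm_nonneg: "0 \<le> H2_sqnorm a b f"
  unfolding H2_sqnorm_def set_lebesgue_integral_def
  by (rule integral_nonneg_AE) (auto simp: indicator_def)



lemma endpt_alg:
  fixes fa fb P Pb :: complex and C S \<omega> :: real
  assumes w: "\<omega> \<noteq> 0" and S: "S \<noteq> 0" and CS: "C\<^sup>2 + S\<^sup>2 = 1"
    and e1: "fb = fa * of_real C + P / of_real \<omega> * of_real S"
    and e2: "Pb = P * of_real C + (- of_real \<omega> * fa) * of_real S"
  shows "P = of_real \<omega> * (fb - fa * of_real C) / of_real S"
    "Pb = of_real \<omega> * (fb * of_real C - fa) / of_real S"
proof -
  have W: "(of_real \<omega> :: complex) \<noteq> 0" "(of_real S :: complex) \<noteq> 0" using w S by auto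
  show P: "P = of_real \<omega> * (fb - fa * of_real C) / of_real S"
    using W unfolding e1 by (simp add: field_simps)
  have CS': "(of_real C :: complex)^2 + (of_real S)^2 = 1"
    by (metis CS of_real_1 of_real_add of_real_power)
  have "Pb = of_real \<omega> * (fb * of_real C - fa * ((of_real C)^2 + (of_real S)^2)) / of_real S"
    unfolding e2 P using W by (simp add: field_simps power2_eq_square)
  then show "Pb = of_real \<omega> * (fb * of_real C - fa) / of_real S" unfolding CS' by simp
qed

lemma loop_alg:
  fixes c P M X Y E E' :: complex and C S \<omega> :: real
  assumes w: "\<omega> \<noteq> 0" and CS: "C\<^sup>2 + S\<^sup>2 = 1" and EE: "E * E' = 1"
    and h1: "c * of_real C + P / of_real \<omega> * of_real S = E * X"
    and h2: "P * of_real C + (- of_real \<omega> * c) * of_real S = E * Y"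
    and h3: "X * of_real C + Y / of_real \<omega> * of_real S = c"
    and h4: "M = Y * of_real C + (- of_real \<omega> * X) * of_real S"
  shows "of_real (2*S*C) * (P - M) = of_real \<omega> * c * (E + E' - 2 * of_real (C\<^sup>2 - S\<^sup>2))"
proof -
  define W where "W = (of_real \<omega> :: complex)"
  define cc where "cc = (of_real C :: complex)"
  define ss where "ss = (of_real S :: complex)"
  have W0: "W \<noteq> 0" using w by (simp add: W_def)
  have CS': "cc^2 + ss^2 = 1" unfolding cc_def ss_def by (metis CS of_real_1 of_real_add of_real_power)
  have h1': "c * cc + P / W * ss = E * X" using h1 unfolding W_def cc_def ss_def .
  have h2': "P * cc - W * c * ss = E * Y" using h2 unfolding W_def cc_def ss_def by simp
  have h3': "X * cc + Y / W * ss = c" using h3 unfolding W_def cc_def ss_def .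
  have h4': "M = Y * cc - W * X * ss" using h4 unfolding W_def cc_def ss_def by simp
  have a: "E * c = c * (cc^2 - ss^2) + 2 * P * ss * cc / W"
  proof -
    have "E * c = cc * (E * X) + ss / W * (E * Y)" unfolding h3'[symmetric] using W0 by (simp add: field_simps)
    also have "\<dots> = c * (cc^2 - ss^2) + 2 * P * ss * cc / W"
      unfolding h1'[symmetric] h2'[symmetric] using W0 by (simp add: field_simps power2_eq_square)
    finally show ?thesis .
  qed
  have b: "E * M = P * (cc^2 - ss^2) - 2 * W * c * ss * cc"
  proof -
    have "E * M = cc * (E * Y) - W * ss * (E * X)" unfolding h4' by (simp add: algebra_simps)
    also have "\<dots> = P * (cc^2 - ss^2) - 2 * W * c * ss * cc"
      unfolding h1'[symmetric] h2'[symmetric] using W0 by (simp add: field_simps power2_eq_square)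
    finally show ?thesis .
  qed
  have aP: "2 * ss * cc * P = W * (E * c - c * (cc^2 - ss^2))"
    using a W0 by (simp add: field_simps)
  have "2 * ss * cc * M = E' * (E * (2 * ss * cc * M))" using EE by (simp add: algebra_simps)
  also have "\<dots> = E' * ((2 * ss * cc * P) * (cc^2 - ss^2) - W * c * (2 * ss * cc)^2)"
    unfolding mult.left_commute[of E] b by (simp add: algebra_simps power2_eq_square)
  also have "\<dots> = W * c * E' * (E * (cc^2 - ss^2) - ((cc^2 - ss^2)^2 + (2 * ss * cc)^2))"
    unfolding aP by (simp add: algebra_simps power2_eq_square)
  also have "(cc^2 - ss^2)^2 + (2 * ss * cc)^2 = (cc^2 + ss^2)^2" by (simp add: algebra_simps power2_eq_square)
  also have "W * c * E' * (E * (cc^2 - ss^2) - (cc^2 + ss^2)^2) = W * c * ((cc^2 - ss^2) - E')"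
  proof -
    have EE2: "E * (E' * z) = z" for z using EE by (metis mult.assoc mult.commute mult_1)
    show ?thesis unfolding CS' by (simp add: algebra_simps EE2)
  qed
  finally have bM: "2 * ss * cc * M = W * c * ((cc^2 - ss^2) - E')" .
  have "of_real (2*S*C) * (P - M) = 2 * ss * cc * P - 2 * ss * cc * M"
    unfolding ss_def cc_def by (simp add: algebra_simps)
  also have "\<dots> = W * c * (E + E' - 2 * (cc^2 - ss^2))" unfolding aP bM by (simp add: algebra_simps)
  finally show ?thesis unfolding W_def cc_def ss_def by simp
qed

lemma vertex_alg:
  fixes c cr cl cu cd Pr Pl Pu Pd D :: complex and \<omega> C1 S1 C2 S2 T3 w :: real
  assumes w0: "\<omega> \<noteq> 0" and S1: "S1 \<noteq> 0" and S2: "S2 \<noteq> 0"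
    and "Pr = of_real \<omega> * (cr - c * of_real C1) / of_real S1"
    and "Pl = of_real \<omega> * (c * of_real C1 - cl) / of_real S1"
    and "Pu = of_real \<omega> * (cu - c * of_real C2) / of_real S2"
    and "Pd = of_real \<omega> * (c * of_real C2 - cd) / of_real S2"
    and "D = - 2 * of_real \<omega> * of_real T3 * c"
  shows "(Pr - Pl + Pu - Pd + of_real w * D = 0) \<longleftrightarrow>
     ((cr + cl) / of_real S1 + (cu + cd) / of_real S2 - 2 * of_real (C1/S1 + C2/S2 + T3) * c
       = 2 * of_real (w - 1) * of_real T3 * c)"
proof -
  have nz: "(of_real \<omega> :: complex) \<noteq> 0" "(of_real S1 :: complex) \<noteq> 0" "(of_real S2 :: complex) \<noteq> 0"
    using assms by auto
  have "Pr - Pl + Pu - Pd + of_real w * D = of_real \<omega> *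
     (((cr + cl) / of_real S1 + (cu + cd) / of_real S2 - 2 * of_real (C1/S1 + C2/S2 + T3) * c)
       - 2 * of_real (w - 1) * of_real T3 * c)"
    unfolding assms(4-8) using nz by (simp add: field_simps)
  then show ?thesis using nz by simp
qed

lemma exp_sum_cos: "exp (- \<i> * of_real \<beta>) + exp (\<i> * of_real \<beta>) = 2 * of_real (cos \<beta>)"
proof -
  have "cos (of_real \<beta> :: complex) = (exp (\<i> * of_real \<beta>) + exp (- (\<i> * of_real \<beta>))) / 2"
    by (rule cos_exp_eq)
  then show ?thesis by (simp add: cos_of_real field_simps)
qed

lemma exp_prod: "exp (- \<i> * of_real \<beta>) * exp (\<i> * of_real \<beta>) = 1"
  by (simp add: exp_minus[symmetric] exp_add[symmetric])



lemma sin_nz: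
  assumes a: "a > 0" and n: "\<forall>n::int. \<omega> \<noteq> pi * of_int n / a"
  shows "sin (\<omega> * a) \<noteq> 0"
proof
  assume "sin (\<omega> * a) = 0"
  then obtain i :: int where "\<omega> * a = of_int i * pi" by (auto simp: sin_zero_iff_int2)
  then have "\<omega> = pi * of_int i / a" using a by (simp add: field_simps)
  then show False using n by blast
qed

lemma g_beta_eq: "g_beta a1 a2 a3 \<beta> \<omega> = cos (\<omega>*a1)/sin (\<omega>*a1) + cos (\<omega>*a2)/sin (\<omega>*a2) + (cos (\<omega>*a3) - cos \<beta>)/sin (\<omega>*a3)"
  by (simp add: g_beta_def tan_def)

lemma loop_core:
  fixes c P M X Y :: complex and \<omega> a3 \<beta> :: real
  defines "C \<equiv> cos (\<omega> * (a3/2))" and "S \<equiv> sin (\<omega> * (a3/2))" and "E \<equiv> exp (- \<i> * of_real \<beta>)"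
  assumes w: "\<omega> \<noteq> 0" and s3: "sin (\<omega> * a3) \<noteq> 0"
    and h1: "c * of_real C + P / of_real \<omega> * of_real S = E * X"
    and h2: "P * of_real C + (- of_real \<omega> * c) * of_real S = E * Y"
    and h3: "X * of_real C + Y / of_real \<omega> * of_real S = c"
    and h4: "M = Y * of_real C + (- of_real \<omega> * X) * of_real S"
  shows "P - M = - 2 * of_real \<omega> * of_real ((cos (\<omega>*a3) - cos \<beta>) / sin (\<omega>*a3)) * c"
proof -
  have CS: "C\<^sup>2 + S\<^sup>2 = 1" unfolding C_def S_def by simp
  have EE: "E * exp (\<i> * of_real \<beta>) = 1" unfolding E_def by (rule exp_prod)
  have L: "of_real (2*S*C) * (P - M) = of_real \<omega> * c * (E + exp (\<i> * of_real \<beta>) - 2 * of_real (C\<^sup>2 - S\<^sup>2))"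
    by (rule loop_alg[OF w CS EE h1 h2 h3 h4])
  have d1: "2*S*C = sin (\<omega>*a3)" unfolding S_def C_def using sin_double[of "\<omega>*(a3/2)"] by simp
  have d2: "C\<^sup>2 - S\<^sup>2 = cos (\<omega>*a3)" unfolding S_def C_def using cos_double[of "\<omega>*(a3/2)"] by simp
  have "of_real (sin (\<omega>*a3)) * (P - M) = of_real \<omega> * c * (2 * of_real (cos \<beta>) - 2 * of_real (cos (\<omega>*a3)))"
    using L unfolding d1 d2 E_def exp_sum_cos .
  then show ?thesis using s3 by (simp add: field_simps)
qed

lemma fwd_endpt:
  fixes \<omega> :: real and f :: "real \<Rightarrow> complex"
  assumes E: "H2_edge a b f" and eig: "edge_eig (\<omega>\<^sup>2) a b f" and w: "\<omega> \<noteq> 0" and ab: "a \<le> b"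
    and S: "sin (\<omega> * (b - a)) \<noteq> 0"
  shows "d1 a b f a = of_real \<omega> * (f b - f a * of_real (cos (\<omega> * (b - a)))) / of_real (sin (\<omega> * (b - a)))"
    "d1 a b f b = of_real \<omega> * (f b * of_real (cos (\<omega> * (b - a))) - f a) / of_real (sin (\<omega> * (b - a)))"
proof -
  have b: "b \<in> {a..b}" using ab by auto
  have e1: "f b = f a * of_real (cos (\<omega> * (b - a))) + d1 a b f a / of_real \<omega> * of_real (sin (\<omega> * (b - a)))"
    using fwd_edge(1)[OF E eig w b] unfolding tf_def .
  have e2: "d1 a b f b = d1 a b f a * of_real (cos (\<omega> * (b - a))) + (- of_real \<omega> * f a) * of_real (sin (\<omega> * (b - a)))"
    using fwd_edge(2)[OF E eig w b] unfolding tf_def .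
  show "d1 a b f a = of_real \<omega> * (f b - f a * of_real (cos (\<omega> * (b - a)))) / of_real (sin (\<omega> * (b - a)))"
    by (rule endpt_alg(1)[OF w S _ e1 e2]) simp
  show "d1 a b f b = of_real \<omega> * (f b * of_real (cos (\<omega> * (b - a))) - f a) / of_real (sin (\<omega> * (b - a)))"
    by (rule endpt_alg(2)[OF w S _ e1 e2]) simp
qed

lemma loop_fwd:
  fixes \<omega> a3 \<beta> :: real and p m :: "real \<Rightarrow> complex" and c :: complex
  assumes Ep: "H2_edge 0 (a3/2) p" and eigp: "edge_eig (\<omega>\<^sup>2) 0 (a3/2) p"
    and Em: "H2_edge (-a3/2) 0 m" and eigm: "edge_eig (\<omega>\<^sup>2) (-a3/2) 0 m"
    and w: "\<omega> \<noteq> 0" and a3: "a3 > 0" and s3: "sin (\<omega> * a3) \<noteq> 0"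
    and c1: "p (a3/2) = exp (- \<i> * of_real \<beta>) * m (-a3/2)"
    and c2: "d1 0 (a3/2) p (a3/2) = exp (- \<i> * of_real \<beta>) * d1 (-a3/2) 0 m (-a3/2)"
    and p0: "p 0 = c" and m0: "m 0 = c"
  shows "d1 0 (a3/2) p 0 - d1 (-a3/2) 0 m 0 = - 2 * of_real \<omega> * of_real ((cos (\<omega>*a3) - cos \<beta>) / sin (\<omega>*a3)) * c"
proof (rule loop_core[OF w s3, where X = "m (-a3/2)" and Y = "d1 (-a3/2) 0 m (-a3/2)"])
  have x1: "a3/2 \<in> {0..a3/2}" "0 \<in> {-a3/2..0}" using a3 by auto
  have eq: "\<omega> * (0 - - a3 / 2) = \<omega> * (a3 / 2)" by simp
  show "c * of_real (cos (\<omega> * (a3 / 2))) + d1 0 (a3 / 2) p 0 / of_real \<omega> * of_real (sin (\<omega> * (a3 / 2))) =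
    exp (- \<i> * of_real \<beta>) * m (- a3 / 2)"
    using fwd_edge(1)[OF Ep eigp w x1(1)] unfolding tf_def c1 p0 by simp
  show "d1 0 (a3 / 2) p 0 * of_real (cos (\<omega> * (a3 / 2))) + (- of_real \<omega> * c) * of_real (sin (\<omega> * (a3 / 2))) =
    exp (- \<i> * of_real \<beta>) * d1 (- a3 / 2) 0 m (- a3 / 2)"
    using fwd_edge(2)[OF Ep eigp w x1(1)] unfolding tf_def c2 p0 by simp
  show "m (- a3 / 2) * of_real (cos (\<omega> * (a3 / 2))) + d1 (- a3 / 2) 0 m (- a3 / 2) / of_real \<omega> * of_real (sin (\<omega> * (a3 / 2))) = c"
    using fwd_edge(1)[OF Em eigm w x1(2)] unfolding tf_def m0 eq by simp
  show "d1 (- a3 / 2) 0 m 0 = d1 (- a3 / 2) 0 m (- a3 / 2) * of_real (cos (\<omega> * (a3 / 2))) + (- of_real \<omega> * m (- a3 / 2)) * of_real (sin (\<omega> * (a3 / 2)))"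
    using fwd_edge(2)[OF Em eigm w x1(2)] unfolding tf_def eq by simp
qed



lemma forward_part:
  fixes a1 a2 a3 \<beta> \<mu> \<omega> :: real and u :: gfun
  assumes a1: "a1 > 0" and a2: "a2 > 0" and a3: "a3 > 0" and w: "\<omega> > 0"
    and s1: "sin (\<omega> * a1) \<noteq> 0" and s2: "sin (\<omega> * a2) \<noteq> 0" and s3: "sin (\<omega> * a3) \<noteq> 0"
    and D: "in_dom a1 a2 a3 \<mu> \<beta> u" and EG: "is_eig_eq a1 a2 a3 (\<omega>\<^sup>2) u"
  shows "in_l2 (vtx a1 u) \<and> disc_system a1 a2 a3 \<mu> \<beta> \<omega> (vtx a1 u)"
proof -
  have w0: "\<omega> \<noteq> 0" using w by simp
  have H2G: "in_H2G a1 a2 a3 u" and cond: "\<forall>k l.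
        gp u k l (a3/2) = exp (- \<i> * of_real \<beta>) * gm u k l (-a3/2) \<and>
        d1 0 (a3/2) (gp u k l) (a3/2) = exp (- \<i> * of_real \<beta>) * d1 (-a3/2) 0 (gm u k l) (-a3/2) \<and>
        d1 (of_int k * a1) (of_int (k+1) * a1) (gh u k l) (of_int k * a1)
        - d1 (of_int (k-1) * a1) (of_int k * a1) (gh u (k-1) l) (of_int k * a1)
        + d1 (of_int l * a2) (of_int (l+1) * a2) (gv u k l) (of_int l * a2)
        - d1 (of_int (l-1) * a2) (of_int l * a2) (gv u k (l-1)) (of_int l * a2)
        + of_real (wmu \<mu> k l) * (d1 0 (a3/2) (gp u k l) 0 - d1 (-a3/2) 0 (gm u k l) 0) = 0"
    using D unfolding in_dom_def by blast+
  have edges: "\<forall>k l. H2_edge (of_int k * a1) (of_int (k+1) * a1) (gh u k l)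
          \<and> H2_edge (of_int l * a2) (of_int (l+1) * a2) (gv u k l)
          \<and> H2_edge 0 (a3/2) (gp u k l)
          \<and> H2_edge (-a3/2) 0 (gm u k l)"
    and cont: "\<forall>k l. gh u (k-1) l (of_int k * a1) = gh u k l (of_int k * a1)
          \<and> gv u k l (of_int l * a2) = gh u k l (of_int k * a1)
          \<and> gv u k (l-1) (of_int l * a2) = gh u k l (of_int k * a1)
          \<and> gp u k l 0 = gh u k l (of_int k * a1)
          \<and> gm u k l 0 = gh u k l (of_int k * a1)"
    and summ: "(\<lambda>(k,l). H2_sqnorm 0 (a3/2) (gp u k l) + H2_sqnorm (-a3/2) 0 (gm u k l)
             + H2_sqnorm (of_int k * a1) (of_int (k+1) * a1) (gh u k l)
             + H2_sqnorm (of_int l * a2) (of_int (l+1) * a2) (gv u k l)) summable_on UNIV"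
    using H2G unfolding in_H2G_def by blast+
  have eig: "\<forall>k l. edge_eig (\<omega>\<^sup>2) (of_int k * a1) (of_int (k+1) * a1) (gh u k l)
          \<and> edge_eig (\<omega>\<^sup>2) (of_int l * a2) (of_int (l+1) * a2) (gv u k l)
          \<and> edge_eig (\<omega>\<^sup>2) 0 (a3/2) (gp u k l)
          \<and> edge_eig (\<omega>\<^sup>2) (-a3/2) 0 (gm u k l)"
    using EG unfolding is_eig_eq_def .
  define c where "c = vtx a1 u"
  have cdef: "c k l = gh u k l (of_int k * a1)" for k l unfolding c_def vtx_def by simp
  define W where "W = (of_real \<omega> :: complex)"
  define C1 where "C1 = cos (\<omega> * a1)"
  define S1 where "S1 = sin (\<omega> * a1)"
  define C2 where "C2 = cos (\<omega> * a2)"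
  define S2 where "S2 = sin (\<omega> * a2)"
  define T3 where "T3 = (cos (\<omega>*a3) - cos \<beta>) / sin (\<omega>*a3)"
  have dk1: "of_int (k+1) * a1 - of_int k * a1 = a1" for k by (simp add: algebra_simps)
  have dk2: "of_int (k+1) * a2 - of_int k * a2 = a2" for k by (simp add: algebra_simps)
  have dk1': "of_int k * a1 - of_int (k-1) * a1 = a1" for k by (simp add: algebra_simps)
  have dk2': "of_int k * a2 - of_int (k-1) * a2 = a2" for k by (simp add: algebra_simps)
  have le1: "of_int k * a1 \<le> of_int (k+1) * a1" for k using a1 by (simp add: algebra_simps)
  have le2: "of_int k * a2 \<le> of_int (k+1) * a2" for k using a2 by (simp add: algebra_simps)
  have le1': "of_int (k-1) * a1 \<le> of_int k * a1" for k using a1 by (simp add: algebra_simps)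
  have le2': "of_int (k-1) * a2 \<le> of_int k * a2" for k using a2 by (simp add: algebra_simps)
  have vert: "(c (k+1) l + c (k-1) l) / of_real S1 + (c k (l+1) + c k (l-1)) / of_real S2
      - 2 * of_real (C1/S1 + C2/S2 + T3) * c k l = 2 * of_real (wmu \<mu> k l - 1) * of_real T3 * c k l" for k l
  proof -
    have Eh: "H2_edge (of_int k * a1) (of_int (k+1) * a1) (gh u k l)" using edges by blast
    have Ehm: "H2_edge (of_int (k-1) * a1) (of_int k * a1) (gh u (k-1) l)" using edges[rule_format, of "k-1" l] by simp
    have Ev: "H2_edge (of_int l * a2) (of_int (l+1) * a2) (gv u k l)" using edges by blast
    have Evm: "H2_edge (of_int (l-1) * a2) (of_int l * a2) (gv u k (l-1))" using edges[rule_format, of k "l-1"] by simp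
    have Gh: "edge_eig (\<omega>\<^sup>2) (of_int k * a1) (of_int (k+1) * a1) (gh u k l)" using eig by blast
    have Ghm: "edge_eig (\<omega>\<^sup>2) (of_int (k-1) * a1) (of_int k * a1) (gh u (k-1) l)" using eig[rule_format, of "k-1" l] by simp
    have Gv: "edge_eig (\<omega>\<^sup>2) (of_int l * a2) (of_int (l+1) * a2) (gv u k l)" using eig by blast
    have Gvm: "edge_eig (\<omega>\<^sup>2) (of_int (l-1) * a2) (of_int l * a2) (gv u k (l-1))" using eig[rule_format, of k "l-1"] by simp
    have v1: "gh u k l (of_int (k+1) * a1) = c (k+1) l" using cont[rule_format, of "k+1" l] by (simp add: cdef)
    have v2: "gh u (k-1) l (of_int k * a1) = c k l" "gh u (k-1) l (of_int (k-1) * a1) = c (k-1) l"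
      using cont[rule_format, of k l] by (simp_all add: cdef)
    have v3: "gv u k l (of_int l * a2) = c k l" "gv u k l (of_int (l+1) * a2) = c k (l+1)"
      using cont[rule_format, of k l] cont[rule_format, of k "l+1"] by (simp_all add: cdef)
    have v4: "gv u k (l-1) (of_int l * a2) = c k l" "gv u k (l-1) (of_int (l-1) * a2) = c k (l-1)"
      using cont[rule_format, of k l] cont[rule_format, of k "l-1"] by (simp_all add: cdef)
    have Pr: "d1 (of_int k * a1) (of_int (k+1) * a1) (gh u k l) (of_int k * a1) = W * (c (k+1) l - c k l * of_real C1) / of_real S1"
      using fwd_endpt(1)[OF Eh Gh w0 le1] s1 unfolding dk1 v1 cdef[symmetric] W_def C1_def S1_def by simp
    have Pl: "d1 (of_int (k-1) * a1) (of_int k * a1) (gh u (k-1) l) (of_int k * a1) = W * (c k l * of_real C1 - c (k-1) l) / of_real S1"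
      using fwd_endpt(2)[OF Ehm Ghm w0 le1'] s1 unfolding dk1' v2 W_def C1_def S1_def by simp
    have Pu: "d1 (of_int l * a2) (of_int (l+1) * a2) (gv u k l) (of_int l * a2) = W * (c k (l+1) - c k l * of_real C2) / of_real S2"
      using fwd_endpt(1)[OF Ev Gv w0 le2] s2 unfolding dk2 v3 W_def C2_def S2_def by simp
    have Pd: "d1 (of_int (l-1) * a2) (of_int l * a2) (gv u k (l-1)) (of_int l * a2) = W * (c k l * of_real C2 - c k (l-1)) / of_real S2"
      using fwd_endpt(2)[OF Evm Gvm w0 le2'] s2 unfolding dk2' v4 W_def C2_def S2_def by simp
    have Lp: "d1 0 (a3/2) (gp u k l) 0 - d1 (-a3/2) 0 (gm u k l) 0 = - 2 * W * of_real T3 * c k l"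
      unfolding W_def T3_def
    proof (rule loop_fwd[OF _ _ _ _ w0 a3 s3])
      show "H2_edge 0 (a3/2) (gp u k l)" "H2_edge (-a3/2) 0 (gm u k l)" using edges by blast+
      show "edge_eig (\<omega>\<^sup>2) 0 (a3/2) (gp u k l)" "edge_eig (\<omega>\<^sup>2) (-a3/2) 0 (gm u k l)" using eig by blast+
      show "gp u k l (a3/2) = exp (- \<i> * of_real \<beta>) * gm u k l (-a3/2)"
        "d1 0 (a3/2) (gp u k l) (a3/2) = exp (- \<i> * of_real \<beta>) * d1 (-a3/2) 0 (gm u k l) (-a3/2)"
        using cond by blast+
      show "gp u k l 0 = c k l" "gm u k l 0 = c k l" using cont by (simp_all add: cdef)
    qed
    have K: "d1 (of_int k * a1) (of_int (k+1) * a1) (gh u k l) (of_int k * a1)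
        - d1 (of_int (k-1) * a1) (of_int k * a1) (gh u (k-1) l) (of_int k * a1)
        + d1 (of_int l * a2) (of_int (l+1) * a2) (gv u k l) (of_int l * a2)
        - d1 (of_int (l-1) * a2) (of_int l * a2) (gv u k (l-1)) (of_int l * a2)
        + of_real (wmu \<mu> k l) * (d1 0 (a3/2) (gp u k l) 0 - d1 (-a3/2) 0 (gm u k l) 0) = 0"
      using cond by blast
    have S1': "S1 \<noteq> 0" "S2 \<noteq> 0" using s1 s2 unfolding S1_def S2_def by auto
    show ?thesis
      using vertex_alg[OF w0 S1' Pr[unfolded W_def] Pl[unfolded W_def] Pu[unfolded W_def] Pd[unfolded W_def] Lp[unfolded W_def], of "wmu \<mu> k l"] K
      by simp
  qed
  have gb: "g_beta a1 a2 a3 \<beta> \<omega> = C1/S1 + C2/S2 + T3" unfolding g_beta_eq C1_def S1_def C2_def S2_def T3_def ..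
  have DS: "disc_system a1 a2 a3 \<mu> \<beta> \<omega> c"
    unfolding disc_system_def
  proof (intro conjI allI impI)
    fix k l :: int assume "(k, l) \<noteq> (0, 0)"
    then have "wmu \<mu> k l = 1" by (auto simp: wmu_def)
    then show "(c (k+1) l + c (k-1) l) / of_real (sin (\<omega> * a1))
        + (c k (l+1) + c k (l-1)) / of_real (sin (\<omega> * a2))
        - 2 * of_real (g_beta a1 a2 a3 \<beta> \<omega>) * c k l = 0"
      using vert[of k l] unfolding gb S1_def S2_def by simp
  next
    have "wmu \<mu> 0 0 = \<mu>" by (simp add: wmu_def)
    then show "(c 1 0 + c (-1) 0) / of_real (sin (\<omega> * a1))
        + (c 0 1 + c 0 (-1)) / of_real (sin (\<omega> * a2))
        - 2 * of_real (g_beta a1 a2 a3 \<beta> \<omega>) * c 0 0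
      = 2 * of_real (\<mu> - 1) * of_real ((cos (\<omega> * a3) - cos \<beta>) / sin (\<omega> * a3)) * c 0 0"
      using vert[of 0 0] unfolding gb S1_def S2_def T3_def by simp
  qed
  define m0 where "m0 = a3/2 * min 1 (\<omega>\<^sup>2)"
  have m0: "m0 > 0" unfolding m0_def using a3 w by auto
  define T where "T = (\<lambda>(k,l). H2_sqnorm 0 (a3/2) (gp u k l) + H2_sqnorm (-a3/2) 0 (gm u k l)
             + H2_sqnorm (of_int k * a1) (of_int (k+1) * a1) (gh u k l)
             + H2_sqnorm (of_int l * a2) (of_int (l+1) * a2) (gv u k l))"
  have L2: "in_l2 c"
    unfolding in_l2_def
  proof (rule summable_on_comparison_test)
    show "(\<lambda>x. T x * (1 / m0)) summable_on UNIV" using summ unfolding T_def[symmetric] by (rule summable_on_cmult_left)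
    fix x :: "int \<times> int"
    obtain k l where x: "x = (k, l)" by fastforce
    show "0 \<le> (case x of (k, l) \<Rightarrow> (cmod (c k l))\<^sup>2)" by (simp add: x)
    have lo: "(a3/2 - 0) * min 1 (\<omega>\<^sup>2) * (cmod (gp u k l 0))\<^sup>2 \<le> H2_sqnorm 0 (a3/2) (gp u k l)"
      by (rule fwd_lower) (use edges eig w0 a3 in auto)
    have "gp u k l 0 = c k l" using cont by (simp add: cdef)
    then have "m0 * (cmod (c k l))\<^sup>2 \<le> T x"
      using lo H2_sqnorm_nonneg[of "-a3/2" 0 "gm u k l"]
        H2_sqnorm_nonneg[of "of_int k * a1" "of_int (k+1) * a1" "gh u k l"]
        H2_sqnorm_nonneg[of "of_int l * a2" "of_int (l+1) * a2" "gv u k l"]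
      unfolding T_def x m0_def by simp
    then show "(case x of (k, l) \<Rightarrow> (cmod (c k l))\<^sup>2) \<le> T x * (1 / m0)"
      using m0 by (simp add: x field_simps)
  qed
  show ?thesis using L2 DS unfolding c_def by simp
qed



lemma tf_end:
  assumes "b - a = L" "sin (\<omega> * L) \<noteq> 0"
  shows "tf \<omega> A ((B - A * of_real (cos (\<omega>*L))) / of_real (sin (\<omega>*L))) a b = B"
  using assms unfolding tf_def by (simp add: field_simps)

lemma tf_lin: "tf \<omega> (W * A) (W * B) a x = W * tf \<omega> A B a x"
  unfolding tf_def by (simp add: algebra_simps)

lemma shift_summable:
  fixes g :: "int \<times> int \<Rightarrow> real"
  assumes "g summable_on UNIV" and "bij h"
  shows "(g \<circ> h) summable_on UNIV"
proof -
  have "inj_on h UNIV" "h ` UNIV = UNIV" using assms(2) by (auto simp: bij_def)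
  then show ?thesis using summable_on_reindex[of h UNIV g] assms(1) by simp
qed

lemma l2_shifts:
  assumes "in_l2 c"
  shows "(\<lambda>(k,l). (cmod (c (k+1) l))\<^sup>2) summable_on UNIV"
    "(\<lambda>(k,l). (cmod (c k (l+1)))\<^sup>2) summable_on UNIV"
proof -
  have g: "(\<lambda>(k,l). (cmod (c k l))\<^sup>2) summable_on UNIV" using assms unfolding in_l2_def .
  have b1: "bij (\<lambda>(k::int,l::int). (k+1,l))"
    by (rule bij_betw_byWitness[where f'="\<lambda>(k,l). (k-1,l)"]) auto
  have b2: "bij (\<lambda>(k::int,l::int). (k,l+1))"
    by (rule bij_betw_byWitness[where f'="\<lambda>(k,l). (k,l-1)"]) auto
  show "(\<lambda>(k,l). (cmod (c (k+1) l))\<^sup>2) summable_on UNIV"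
    using shift_summable[OF g b1] unfolding comp_def case_prod_unfold by simp
  show "(\<lambda>(k,l). (cmod (c k (l+1)))\<^sup>2) summable_on UNIV"
    using shift_summable[OF g b2] unfolding comp_def case_prod_unfold by simp
qed

lemma sq_sum_le: "((x::real) + y)\<^sup>2 \<le> 2 * (x\<^sup>2 + y\<^sup>2)"
  using zero_le_power2[of "x - y"] unfolding power2_diff power2_sum by (smt (verit))

lemma coef_bound:
  fixes A B :: complex and C S :: real
  assumes "\<bar>C\<bar> \<le> 1" "S \<noteq> 0"
  shows "(cmod ((B - A * of_real C) / of_real S))\<^sup>2 \<le> 2 * ((cmod A)\<^sup>2 + (cmod B)\<^sup>2) / S\<^sup>2"
proof -
  have "cmod (B - A * of_real C) \<le> cmod B + cmod A * \<bar>C\<bar>" by (metis norm_mult norm_of_real norm_triangle_ineq4)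
  also have "\<dots> \<le> cmod B + cmod A" using assms(1) by (simp add: mult_left_le)
  finally have n: "cmod (B - A * of_real C) \<le> cmod A + cmod B" by simp
  have "(cmod ((B - A * of_real C) / of_real S))\<^sup>2 = (cmod (B - A * of_real C))\<^sup>2 / S\<^sup>2"
    by (simp add: norm_divide power_divide)
  also have "\<dots> \<le> (cmod A + cmod B)\<^sup>2 / S\<^sup>2"
    by (intro divide_right_mono power_mono n) auto
  also have "\<dots> \<le> 2 * ((cmod A)\<^sup>2 + (cmod B)\<^sup>2) / S\<^sup>2"
    by (intro divide_right_mono sq_sum_le) auto
  finally show ?thesis .
qed

lemma Q_bound:
  fixes c :: complex and co s \<beta> :: real
  assumes "\<bar>co\<bar> \<le> 1" "s \<noteq> 0"
  shows "(cmod (c * (exp (- \<i> * of_real \<beta>) - of_real co) / of_real s))\<^sup>2 \<le> 4 * (cmod c)\<^sup>2 / s\<^sup>2"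
proof -
  have e: "cmod (exp (- \<i> * of_real \<beta>)) = 1"
    using norm_exp_i_times[of "-\<beta>"] by simp
  have "cmod (exp (- \<i> * of_real \<beta>) - of_real co) \<le> cmod (exp (- \<i> * of_real \<beta>)) + cmod (of_real co :: complex)"
    by (rule norm_triangle_ineq4)
  also have "\<dots> \<le> 2" using e assms(1) by simp
  finally have n: "cmod (exp (- \<i> * of_real \<beta>) - of_real co) \<le> 2" .
  have "(cmod (c * (exp (- \<i> * of_real \<beta>) - of_real co) / of_real s))\<^sup>2
      = (cmod c)\<^sup>2 * (cmod (exp (- \<i> * of_real \<beta>) - of_real co))\<^sup>2 / s\<^sup>2"
    by (simp add: norm_divide norm_mult power_divide power_mult_distrib)
  also have "\<dots> \<le> (cmod c)\<^sup>2 * 2\<^sup>2 / s\<^sup>2"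
    by (intro divide_right_mono mult_left_mono power_mono n) auto
  finally show ?thesis by (simp add: mult.commute)
qed



lemma converse_part:
  fixes a1 a2 a3 \<beta> \<mu> \<omega> :: real and c :: "int \<Rightarrow> int \<Rightarrow> complex"
  assumes a1: "a1 > 0" and a2: "a2 > 0" and a3: "a3 > 0" and w: "\<omega> > 0"
    and s1: "sin (\<omega> * a1) \<noteq> 0" and s2: "sin (\<omega> * a2) \<noteq> 0" and s3: "sin (\<omega> * a3) \<noteq> 0"
    and L2: "in_l2 c" and DS: "disc_system a1 a2 a3 \<mu> \<beta> \<omega> c"
  shows "\<exists>u. in_dom a1 a2 a3 \<mu> \<beta> u \<and> is_eig_eq a1 a2 a3 (\<omega>\<^sup>2) u \<and> vtx a1 u = c"
proof -
  have w0: "\<omega> \<noteq> 0" using w by simp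
  define W where "W = (of_real \<omega> :: complex)"
  have W0: "W \<noteq> 0" using w0 by (simp add: W_def)
  define C1 where "C1 = cos (\<omega> * a1)"
  define S1 where "S1 = sin (\<omega> * a1)"
  define C2 where "C2 = cos (\<omega> * a2)"
  define S2 where "S2 = sin (\<omega> * a2)"
  define T3 where "T3 = (cos (\<omega>*a3) - cos \<beta>) / sin (\<omega>*a3)"
  define E where "E = exp (- \<i> * of_real \<beta>)"
  define E' where "E' = exp (\<i> * of_real \<beta>)"
  have EE: "E * E' = 1" unfolding E_def E'_def by (rule exp_prod)
  define C where "C = cos (\<omega> * (a3/2))"
  define S where "S = sin (\<omega> * (a3/2))"
  define Bh where "Bh k l = (c (k+1) l - c k l * of_real C1) / of_real S1" for k l
  define Bv where "Bv k l = (c k (l+1) - c k l * of_real C2) / of_real S2" for k l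
  define Q where "Q k l = c k l * (E - of_real (cos (\<omega>*a3))) / of_real (sin (\<omega>*a3))" for k l
  define X where "X k l = E' * tf \<omega> (c k l) (Q k l) 0 (a3/2)" for k l
  define Y where "Y k l = E' * tf \<omega> (Q k l) (- c k l) 0 (a3/2)" for k l
  define u where "u = \<lparr>gh = (\<lambda>k l. tf \<omega> (c k l) (Bh k l) (of_int k * a1)),
                      gv = (\<lambda>k l. tf \<omega> (c k l) (Bv k l) (of_int l * a2)),
                      gp = (\<lambda>k l. tf \<omega> (c k l) (Q k l) 0),
                      gm = (\<lambda>k l. tf \<omega> (X k l) (Y k l) (-a3/2))\<rparr>"
  have lt1: "of_int k * a1 < of_int (k+1) * a1" for k using a1 by (simp add: algebra_simps)
  have lt2: "of_int k * a2 < of_int (k+1) * a2" for k using a2 by (simp add: algebra_simps)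
  have lt3: "0 < a3/2" "-a3/2 < 0" using a3 by auto
  have dk1: "of_int (k+1) * a1 - of_int k * a1 = a1" for k by (simp add: algebra_simps)
  have dk2: "of_int (k+1) * a2 - of_int k * a2 = a2" for k by (simp add: algebra_simps)
  have dk1': "of_int k * a1 - of_int (k-1) * a1 = a1" for k by (simp add: algebra_simps)
  have dk2': "of_int k * a2 - of_int (k-1) * a2 = a2" for k by (simp add: algebra_simps)
  have vtxc: "vtx a1 u = c" unfolding vtx_def u_def by (simp add: tf_a fun_eq_iff)
  have m0: "tf \<omega> (X k l) (Y k l) (-a3/2) 0 = c k l" for k l
  proof -
    have d1: "2*S*C = sin (\<omega>*a3)" unfolding S_def C_def using sin_double[of "\<omega>*(a3/2)"] by simp
    have d2: "C\<^sup>2 - S\<^sup>2 = cos (\<omega>*a3)" unfolding S_def C_def using cos_double[of "\<omega>*(a3/2)"] by simp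
    have "tf \<omega> (X k l) (Y k l) (-a3/2) 0 = E' * (c k l * of_real (C\<^sup>2 - S\<^sup>2) + Q k l * of_real (2*S*C))"
      unfolding X_def Y_def tf_def C_def S_def by (simp add: algebra_simps power2_eq_square)
    also have "\<dots> = E' * (E * c k l)"
      unfolding d1 d2 Q_def using s3 by (simp add: field_simps)
    also have "\<dots> = c k l" using EE by (simp add: algebra_simps)
    finally show ?thesis .
  qed

  have ghu: "gh u k l = tf \<omega> (c k l) (Bh k l) (of_int k * a1)" for k l by (simp add: u_def)
  have gvu: "gv u k l = tf \<omega> (c k l) (Bv k l) (of_int l * a2)" for k l by (simp add: u_def)
  have gpu: "gp u k l = tf \<omega> (c k l) (Q k l) 0" for k l by (simp add: u_def)
  have gmu: "gm u k l = tf \<omega> (X k l) (Y k l) (-a3/2)" for k l by (simp add: u_def)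
  have eigu: "is_eig_eq a1 a2 a3 (\<omega>\<^sup>2) u"
    unfolding is_eig_eq_def ghu gvu gpu gmu
    using tf_edge(3)[OF lt1] tf_edge(3)[OF lt2] tf_edge(3)[OF lt3(1)] tf_edge(3)[OF lt3(2)] by blast
  have edges: "\<forall>k l. H2_edge (of_int k * a1) (of_int (k+1) * a1) (gh u k l)
          \<and> H2_edge (of_int l * a2) (of_int (l+1) * a2) (gv u k l)
          \<and> H2_edge 0 (a3/2) (gp u k l)
          \<and> H2_edge (-a3/2) 0 (gm u k l)"
    unfolding ghu gvu gpu gmu
    using tf_edge(1)[OF lt1] tf_edge(1)[OF lt2] tf_edge(1)[OF lt3(1)] tf_edge(1)[OF lt3(2)] by blast
  have ltm1: "of_int (k-1) * a1 < of_int k * a1" for k using a1 by (simp add: algebra_simps)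
  have ltm2: "of_int (k-1) * a2 < of_int k * a2" for k using a2 by (simp add: algebra_simps)
  have S1nz: "S1 \<noteq> 0" "S2 \<noteq> 0" using s1 s2 by (auto simp: S1_def S2_def)
  have hend: "gh u (k-1) l (of_int k * a1) = c k l" for k l
    unfolding ghu Bh_def C1_def S1_def using tf_end[OF dk1' s1] by simp
  have vend: "gv u k (l-1) (of_int l * a2) = c k l" for k l
    unfolding gvu Bv_def C2_def S2_def using tf_end[OF dk2' s2] by simp
  have cont: "\<forall>k l. gh u (k-1) l (of_int k * a1) = gh u k l (of_int k * a1)
          \<and> gv u k l (of_int l * a2) = gh u k l (of_int k * a1)
          \<and> gv u k (l-1) (of_int l * a2) = gh u k l (of_int k * a1)
          \<and> gp u k l 0 = gh u k l (of_int k * a1)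
          \<and> gm u k l 0 = gh u k l (of_int k * a1)"
    using hend vend m0 unfolding ghu gvu gpu gmu by (simp add: tf_a)
  have Pr: "d1 (of_int k * a1) (of_int (k+1) * a1) (gh u k l) (of_int k * a1) = W * (c (k+1) l - c k l * of_real C1) / of_real S1" for k l
  proof -
    have "d1 (of_int k * a1) (of_int (k+1) * a1) (gh u k l) (of_int k * a1) = tf \<omega> (W * Bh k l) (- W * c k l) (of_int k * a1) (of_int k * a1)"
      unfolding ghu W_def by (rule tf_edge(2)[OF lt1]) (use lt1[of k] in auto)
    then show ?thesis by (simp add: tf_a Bh_def)
  qed
  have Pu: "d1 (of_int l * a2) (of_int (l+1) * a2) (gv u k l) (of_int l * a2) = W * (c k (l+1) - c k l * of_real C2) / of_real S2" for k l
  proof -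
    have "d1 (of_int l * a2) (of_int (l+1) * a2) (gv u k l) (of_int l * a2) = tf \<omega> (W * Bv k l) (- W * c k l) (of_int l * a2) (of_int l * a2)"
      unfolding gvu W_def by (rule tf_edge(2)[OF lt2]) (use lt2[of l] in auto)
    then show ?thesis by (simp add: tf_a Bv_def)
  qed
  have Pl: "d1 (of_int (k-1) * a1) (of_int k * a1) (gh u (k-1) l) (of_int k * a1) = W * (c k l * of_real C1 - c (k-1) l) / of_real S1" for k l
  proof (rule endpt_alg(2)[OF w0 S1nz(1), where C=C1 and fa="c (k-1) l" and fb="c k l" and P="W * Bh (k-1) l", folded W_def])
    show "C1\<^sup>2 + S1\<^sup>2 = 1" unfolding C1_def S1_def by simp
    have "c k l = tf \<omega> (c (k-1) l) (Bh (k-1) l) (of_int (k-1) * a1) (of_int k * a1)" using hend[of k l] unfolding ghu by simp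
    then show "c k l = c (k-1) l * of_real C1 + W * Bh (k-1) l / W * of_real S1"
      using W0 unfolding tf_def dk1' C1_def S1_def by simp
    have "d1 (of_int (k-1) * a1) (of_int k * a1) (gh u (k-1) l) (of_int k * a1)
        = tf \<omega> (W * Bh (k-1) l) (- W * c (k-1) l) (of_int (k-1) * a1) (of_int k * a1)"
      unfolding ghu W_def by (rule tf_edge(2)[OF ltm1]) (use ltm1[of k] in auto)
    then show "d1 (of_int (k-1) * a1) (of_int k * a1) (gh u (k-1) l) (of_int k * a1)
        = W * Bh (k-1) l * of_real C1 + (- W * c (k-1) l) * of_real S1"
      unfolding tf_def dk1' C1_def S1_def .
  qed
  have Pd: "d1 (of_int (l-1) * a2) (of_int l * a2) (gv u k (l-1)) (of_int l * a2) = W * (c k l * of_real C2 - c k (l-1)) / of_real S2" for k l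
  proof (rule endpt_alg(2)[OF w0 S1nz(2), where C=C2 and fa="c k (l-1)" and fb="c k l" and P="W * Bv k (l-1)", folded W_def])
    show "C2\<^sup>2 + S2\<^sup>2 = 1" unfolding C2_def S2_def by simp
    have "c k l = tf \<omega> (c k (l-1)) (Bv k (l-1)) (of_int (l-1) * a2) (of_int l * a2)" using vend[of k l] unfolding gvu by simp
    then show "c k l = c k (l-1) * of_real C2 + W * Bv k (l-1) / W * of_real S2"
      using W0 unfolding tf_def dk2' C2_def S2_def by simp
    have "d1 (of_int (l-1) * a2) (of_int l * a2) (gv u k (l-1)) (of_int l * a2)
        = tf \<omega> (W * Bv k (l-1)) (- W * c k (l-1)) (of_int (l-1) * a2) (of_int l * a2)"
      unfolding gvu W_def by (rule tf_edge(2)[OF ltm2]) (use ltm2[of l] in auto)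
    then show "d1 (of_int (l-1) * a2) (of_int l * a2) (gv u k (l-1)) (of_int l * a2)
        = W * Bv k (l-1) * of_real C2 + (- W * c k (l-1)) * of_real S2"
      unfolding tf_def dk2' C2_def S2_def .
  qed
  have xs: "a3/2 \<in> {0..a3/2}" "0 \<in> {0..a3/2}" "-a3/2 \<in> {-a3/2..0}" "0 \<in> {-a3/2..0}" using a3 by auto
  have dp: "d1 0 (a3/2) (gp u k l) x = tf \<omega> (W * Q k l) (- W * c k l) 0 x" if "x \<in> {0..a3/2}" for k l x
    unfolding gpu W_def by (rule tf_edge(2)[OF lt3(1) that])
  have dm: "d1 (-a3/2) 0 (gm u k l) x = tf \<omega> (W * Y k l) (- W * X k l) (-a3/2) x" if "x \<in> {-a3/2..0}" for k l x
    unfolding gmu W_def by (rule tf_edge(2)[OF lt3(2) that])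
  have eqa: "\<omega> * (0 - - a3 / 2) = \<omega> * (a3 / 2)" "\<omega> * (a3 / 2 - 0) = \<omega> * (a3 / 2)" by simp_all
  have EE2: "E * (E' * z) = z" for z using EE by (metis mult.assoc mult_1)
  have EE3: "E' * (E * z) = z" for z using EE by (metis mult.assoc mult.commute mult_1)
  have Lp: "d1 0 (a3/2) (gp u k l) 0 - d1 (-a3/2) 0 (gm u k l) 0 = - 2 * W * of_real T3 * c k l" for k l
    unfolding W_def T3_def
  proof (rule loop_core[OF w0 s3, where X = "X k l" and Y = "W * Y k l"])
    show "c k l * of_real (cos (\<omega> * (a3 / 2))) + d1 0 (a3/2) (gp u k l) 0 / of_real \<omega> * of_real (sin (\<omega> * (a3 / 2))) =
      exp (- \<i> * of_real \<beta>) * X k l"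
      unfolding dp[OF xs(2)] X_def E_def[symmetric] EE2 by (simp add: tf_def W_def w0)
    show "d1 0 (a3/2) (gp u k l) 0 * of_real (cos (\<omega> * (a3 / 2))) + (- of_real \<omega> * c k l) * of_real (sin (\<omega> * (a3 / 2))) =
      exp (- \<i> * of_real \<beta>) * (W * Y k l)"
      unfolding dp[OF xs(2)] Y_def E_def[symmetric] mult.left_commute[of E] EE2 by (simp add: tf_def W_def algebra_simps EE3)
    show "X k l * of_real (cos (\<omega> * (a3 / 2))) + W * Y k l / of_real \<omega> * of_real (sin (\<omega> * (a3 / 2))) = c k l"
      using m0[of k l] W0 unfolding tf_def eqa W_def by simp
    show "d1 (- a3 / 2) 0 (gm u k l) 0 = W * Y k l * of_real (cos (\<omega> * (a3 / 2))) + (- of_real \<omega> * X k l) * of_real (sin (\<omega> * (a3 / 2)))"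
      unfolding dm[OF xs(4)] tf_def eqa W_def by simp
  qed

  have gb: "g_beta a1 a2 a3 \<beta> \<omega> = C1/S1 + C2/S2 + T3" unfolding g_beta_eq C1_def S1_def C2_def S2_def T3_def ..
  have V: "(c (k+1) l + c (k-1) l) / of_real S1 + (c k (l+1) + c k (l-1)) / of_real S2
      - 2 * of_real (C1/S1 + C2/S2 + T3) * c k l = 2 * of_real (wmu \<mu> k l - 1) * of_real T3 * c k l" for k l
  proof (cases "(k, l) = (0, 0)")
    case True
    then have kl: "k = 0" "l = 0" by auto
    have "wmu \<mu> 0 0 = \<mu>" by (simp add: wmu_def)
    then show ?thesis using DS unfolding disc_system_def kl gb S1_def S2_def T3_def by simp
  next
    case False
    then have "wmu \<mu> k l = 1" by (auto simp: wmu_def)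
    then show ?thesis using DS False unfolding disc_system_def gb S1_def S2_def by simp
  qed
  have Kir: "d1 (of_int k * a1) (of_int (k+1) * a1) (gh u k l) (of_int k * a1)
        - d1 (of_int (k-1) * a1) (of_int k * a1) (gh u (k-1) l) (of_int k * a1)
        + d1 (of_int l * a2) (of_int (l+1) * a2) (gv u k l) (of_int l * a2)
        - d1 (of_int (l-1) * a2) (of_int l * a2) (gv u k (l-1)) (of_int l * a2)
        + of_real (wmu \<mu> k l) * (d1 0 (a3/2) (gp u k l) 0 - d1 (-a3/2) 0 (gm u k l) 0) = 0" for k l
    using vertex_alg[OF w0 S1nz Pr[of k l, unfolded W_def] Pl[of k l, unfolded W_def] Pu[where k=k and l=l, unfolded W_def] Pd[where k=k and l=l, unfolded W_def] Lp[of k l, unfolded W_def], where w="wmu \<mu> k l"] V[of k l]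
    by simp
  have bc: "\<forall>k l. gp u k l (a3/2) = exp (- \<i> * of_real \<beta>) * gm u k l (-a3/2) \<and>
        d1 0 (a3/2) (gp u k l) (a3/2) = exp (- \<i> * of_real \<beta>) * d1 (-a3/2) 0 (gm u k l) (-a3/2)"
  proof (intro allI conjI)
    fix k l
    show "gp u k l (a3/2) = exp (- \<i> * of_real \<beta>) * gm u k l (-a3/2)"
      unfolding gmu gpu tf_a X_def E_def[symmetric] EE2 ..
    have "d1 0 (a3/2) (gp u k l) (a3/2) = W * tf \<omega> (Q k l) (- c k l) 0 (a3/2)"
      unfolding dp[OF xs(1)] by (metis tf_lin mult_minus_left mult_minus_right)
    also have "\<dots> = E * d1 (-a3/2) 0 (gm u k l) (-a3/2)"
      unfolding dm[OF xs(3)] tf_a Y_def by (metis EE2 mult.left_commute)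
    finally show "d1 0 (a3/2) (gp u k l) (a3/2) = exp (- \<i> * of_real \<beta>) * d1 (-a3/2) 0 (gm u k l) (-a3/2)"
      unfolding E_def .
  qed
  define K0 where "K0 = 2*(1+\<omega>\<^sup>2+\<omega>^4)"
  have K0: "K0 \<ge> 0" unfolding K0_def by (simp add: add_nonneg_nonneg)
  define N where "N k l = (cmod (c k l))\<^sup>2 + (cmod (c (k+1) l))\<^sup>2 + (cmod (c k (l+1)))\<^sup>2" for k l
  define K where "K = K0 * (a1*(1+2/S1\<^sup>2) + a2*(1+2/S2\<^sup>2) + (a3/2)*5*(1+4/(sin (\<omega>*a3))\<^sup>2))"
  have Nsum: "(\<lambda>(k,l). N k l) summable_on UNIV"
  proof -
    have g: "(\<lambda>(k,l). (cmod (c k l))\<^sup>2) summable_on UNIV" using L2 unfolding in_l2_def .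
    have "(\<lambda>x. (case x of (k,l) \<Rightarrow> (cmod (c k l))\<^sup>2) + (case x of (k,l) \<Rightarrow> (cmod (c (k+1) l))\<^sup>2)
        + (case x of (k,l) \<Rightarrow> (cmod (c k (l+1)))\<^sup>2)) summable_on UNIV"
      by (intro summable_on_add g l2_shifts[OF L2])
    then show ?thesis unfolding N_def case_prod_unfold by simp
  qed
  have Tb: "H2_sqnorm 0 (a3/2) (gp u k l) + H2_sqnorm (-a3/2) 0 (gm u k l)
             + H2_sqnorm (of_int k * a1) (of_int (k+1) * a1) (gh u k l)
             + H2_sqnorm (of_int l * a2) (of_int (l+1) * a2) (gv u k l) \<le> K * N k l" for k l
  proof -
    have Nge: "(cmod (c k l))\<^sup>2 + (cmod (c (k+1) l))\<^sup>2 \<le> N k l" "(cmod (c k l))\<^sup>2 + (cmod (c k (l+1)))\<^sup>2 \<le> N k l"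
      "(cmod (c k l))\<^sup>2 \<le> N k l" unfolding N_def by auto
    have S1p: "S1\<^sup>2 > 0" "S2\<^sup>2 > 0" using S1nz by auto
    have bh: "(cmod (c k l))\<^sup>2 + (cmod (Bh k l))\<^sup>2 \<le> (1 + 2/S1\<^sup>2) * N k l"
    proof -
      have "(cmod (Bh k l))\<^sup>2 \<le> 2 * ((cmod (c k l))\<^sup>2 + (cmod (c (k+1) l))\<^sup>2) / S1\<^sup>2"
        unfolding Bh_def by (rule coef_bound) (use S1nz in \<open>auto simp: C1_def\<close>)
      also have "\<dots> \<le> 2 * N k l / S1\<^sup>2" using Nge(1) S1p by (intro divide_right_mono) auto
      finally show ?thesis using Nge(3) by (simp add: distrib_right)
    qed
    have bv: "(cmod (c k l))\<^sup>2 + (cmod (Bv k l))\<^sup>2 \<le> (1 + 2/S2\<^sup>2) * N k l"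
    proof -
      have "(cmod (Bv k l))\<^sup>2 \<le> 2 * ((cmod (c k l))\<^sup>2 + (cmod (c k (l+1)))\<^sup>2) / S2\<^sup>2"
        unfolding Bv_def by (rule coef_bound) (use S1nz in \<open>auto simp: C2_def\<close>)
      also have "\<dots> \<le> 2 * N k l / S2\<^sup>2" using Nge(2) S1p by (intro divide_right_mono) auto
      finally show ?thesis using Nge(3) by (simp add: distrib_right)
    qed
    define q where "q = (cmod (c k l))\<^sup>2 + (cmod (Q k l))\<^sup>2"
    have qb: "q \<le> (1 + 4/(sin (\<omega>*a3))\<^sup>2) * N k l"
    proof -
      have "(cmod (Q k l))\<^sup>2 \<le> 4 * (cmod (c k l))\<^sup>2 / (sin (\<omega>*a3))\<^sup>2"
        unfolding Q_def E_def by (rule Q_bound) (use s3 in auto)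
      also have "\<dots> \<le> 4 * N k l / (sin (\<omega>*a3))\<^sup>2" using Nge(3) by (intro divide_right_mono) auto
      finally show ?thesis using Nge(3) unfolding q_def by (simp add: distrib_right)
    qed
    have nE': "cmod E' = 1" unfolding E'_def by simp
    have xy: "(cmod (X k l))\<^sup>2 + (cmod (Y k l))\<^sup>2 \<le> 4 * q"
    proof -
      have "(cmod (X k l))\<^sup>2 \<le> 2 * ((cmod (c k l))\<^sup>2 + (cmod (Q k l))\<^sup>2)"
        unfolding X_def norm_mult nE' using tf_norm_sq by simp
      moreover have "(cmod (Y k l))\<^sup>2 \<le> 2 * ((cmod (Q k l))\<^sup>2 + (cmod (- c k l))\<^sup>2)"
        unfolding Y_def norm_mult nE' using tf_norm_sq[of \<omega> "Q k l" "- c k l" 0 "a3/2"] by simp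
      ultimately show ?thesis unfolding q_def by simp
    qed
    have h1: "H2_sqnorm (of_int k * a1) (of_int (k+1) * a1) (gh u k l) \<le> a1 * K0 * ((1 + 2/S1\<^sup>2) * N k l)"
    proof -
      have "H2_sqnorm (of_int k * a1) (of_int (k+1) * a1) (gh u k l) \<le> a1 * K0 * ((cmod (c k l))\<^sup>2 + (cmod (Bh k l))\<^sup>2)"
        using tf_edge(4)[OF lt1[of k], of \<omega> "c k l" "Bh k l"] unfolding ghu dk1 K0_def by simp
      also have "\<dots> \<le> a1 * K0 * ((1 + 2/S1\<^sup>2) * N k l)" using a1 K0 bh by (intro mult_left_mono) auto
      finally show ?thesis .
    qed
    have h2: "H2_sqnorm (of_int l * a2) (of_int (l+1) * a2) (gv u k l) \<le> a2 * K0 * ((1 + 2/S2\<^sup>2) * N k l)"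
    proof -
      have "H2_sqnorm (of_int l * a2) (of_int (l+1) * a2) (gv u k l) \<le> a2 * K0 * ((cmod (c k l))\<^sup>2 + (cmod (Bv k l))\<^sup>2)"
        using tf_edge(4)[OF lt2[of l], of \<omega> "c k l" "Bv k l"] unfolding gvu dk2 K0_def by simp
      also have "\<dots> \<le> a2 * K0 * ((1 + 2/S2\<^sup>2) * N k l)" using a2 K0 bv by (intro mult_left_mono) auto
      finally show ?thesis .
    qed
    have h3: "H2_sqnorm 0 (a3/2) (gp u k l) + H2_sqnorm (-a3/2) 0 (gm u k l) \<le> (a3/2) * K0 * (5 * ((1 + 4/(sin (\<omega>*a3))\<^sup>2) * N k l))"
    proof -
      have "H2_sqnorm 0 (a3/2) (gp u k l) \<le> (a3/2) * K0 * q"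
        using tf_edge(4)[OF lt3(1), of \<omega> "c k l" "Q k l"] unfolding gpu K0_def q_def by simp
      moreover have "H2_sqnorm (-a3/2) 0 (gm u k l) \<le> (a3/2) * K0 * ((cmod (X k l))\<^sup>2 + (cmod (Y k l))\<^sup>2)"
        using tf_edge(4)[OF lt3(2), of \<omega> "X k l" "Y k l"] unfolding gmu K0_def by simp
      moreover have "(a3/2) * K0 * ((cmod (X k l))\<^sup>2 + (cmod (Y k l))\<^sup>2) \<le> (a3/2) * K0 * (4 * q)"
        using a3 K0 xy by (intro mult_left_mono) auto
      ultimately have "H2_sqnorm 0 (a3/2) (gp u k l) + H2_sqnorm (-a3/2) 0 (gm u k l) \<le> (a3/2) * K0 * (5 * q)"
        by (simp add: algebra_simps)
      also have "\<dots> \<le> (a3/2) * K0 * (5 * ((1 + 4/(sin (\<omega>*a3))\<^sup>2) * N k l))"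
        using a3 K0 qb by (intro mult_left_mono) auto
      finally show ?thesis .
    qed
    show ?thesis using h1 h2 h3 unfolding K_def by (simp add: algebra_simps)
  qed
  have summ: "(\<lambda>(k,l). H2_sqnorm 0 (a3/2) (gp u k l) + H2_sqnorm (-a3/2) 0 (gm u k l)
             + H2_sqnorm (of_int k * a1) (of_int (k+1) * a1) (gh u k l)
             + H2_sqnorm (of_int l * a2) (of_int (l+1) * a2) (gv u k l)) summable_on UNIV"
  proof (rule summable_on_comparison_test)
    show "(\<lambda>x. K * (case x of (k,l) \<Rightarrow> N k l)) summable_on UNIV" by (intro summable_on_cmult_right Nsum)
    fix x :: "int \<times> int"
    obtain k l where x: "x = (k, l)" by fastforce
    show "(case x of (k,l) \<Rightarrow> H2_sqnorm 0 (a3/2) (gp u k l) + H2_sqnorm (-a3/2) 0 (gm u k l)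
             + H2_sqnorm (of_int k * a1) (of_int (k+1) * a1) (gh u k l)
             + H2_sqnorm (of_int l * a2) (of_int (l+1) * a2) (gv u k l)) \<le> K * (case x of (k,l) \<Rightarrow> N k l)"
      using Tb[of k l] by (simp add: x)
    show "0 \<le> (case x of (k,l) \<Rightarrow> H2_sqnorm 0 (a3/2) (gp u k l) + H2_sqnorm (-a3/2) 0 (gm u k l)
             + H2_sqnorm (of_int k * a1) (of_int (k+1) * a1) (gh u k l)
             + H2_sqnorm (of_int l * a2) (of_int (l+1) * a2) (gv u k l))"
      by (simp add: x H2_sqnorm_nonneg add_nonneg_nonneg)
  qed
  have dom: "in_dom a1 a2 a3 \<mu> \<beta> u"
    unfolding in_dom_def in_H2G_def using edges cont summ bc Kir by blast
  show ?thesis using dom eigu vtxc by blast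
qed


theorem lemma2:
  fixes a1 a2 a3 \<beta> \<mu> \<omega> :: real
  assumes "a1 > 0" "a2 > 0" "a3 > 0" "\<mu> > 0" "\<omega> > 0"
    and "\<forall>n::int. \<omega> \<noteq> pi * of_int n / a1"
    and "\<forall>n::int. \<omega> \<noteq> pi * of_int n / a2"
    and "\<forall>n::int. \<omega> \<noteq> pi * of_int n / a3"
  shows "(\<forall>u. in_dom a1 a2 a3 \<mu> \<beta> u \<longrightarrow>
            is_eig_eq a1 a2 a3 (\<omega>\<^sup>2) u \<longrightarrow>
             in_l2 (vtx a1 u) \<and> disc_system a1 a2 a3 \<mu> \<beta> \<omega> (vtx a1 u))
       \<and> (\<forall>c. in_l2 c \<and> disc_system a1 a2 a3 \<mu> \<beta> \<omega> c \<longrightarrow>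
            (\<exists>u. in_dom a1 a2 a3 \<mu> \<beta> u \<and> is_eig_eq a1 a2 a3 (\<omega>\<^sup>2) u \<and> vtx a1 u = c))"
proof -
  have s1: "sin (\<omega> * a1) \<noteq> 0" by (rule sin_nz[OF assms(1) assms(6)])
  have s2: "sin (\<omega> * a2) \<noteq> 0" by (rule sin_nz[OF assms(2) assms(7)])
  have s3: "sin (\<omega> * a3) \<noteq> 0" by (rule sin_nz[OF assms(3) assms(8)])
  show ?thesis
    using forward_part[OF assms(1,2,3,5) s1 s2 s3] converse_part[OF assms(1,2,3,5) s1 s2 s3] by blast
qed

end
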